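(* Let $E$ be a Banach space, $T\colon\ell^1\to E$ a continuous linear operator with $T(e_n)\neq0$ for all $n$, and $0<r<\infty$. Then $\ell^1(m_T)\subset\ell^r(m_T)$ if and only if $T$ is $r$-power dominated, i.e. there exists $C>0$ such that $$\Big\|\sum_{j\in F}x_j^r\,T(e_j)\Big\|_E^{1/r}\le C\sup_{N\subset F}\Big\|\sum_{j\in N}x_jT(e_j)\Big\|_E$$ for every finite $F\subset\mathbb N$ and every $(x_j)_{j\in F}\subset[0,\infty)$.
   Context: $e_n=\chi_{\{n\}}$; $\ell^0$ is the space of all real sequences, $\mathcal P_F(\mathbb N)$ the $\delta$-ring of finite subsets of $\mathbb N$. $m_T\colon\mathcal P_F(\mathbb N)\to E$, $m_T(A)=T(\chi_A)=\sum_{j\in A}T(e_j)$, is a vector measure whose only null set is $\emptyset$. For $x^*\in E^*$, $|x^*m_T|$ is the variation measure of $x^*\circ m_T$ on $\mathcal P(\mathbb N)$. $\ell^1(m_T)$ is the set of sequences $x\in\ell^0$ with $x\in L^1(|x^*m_T|)$ for every $x^*\in E^*$ and such that for each $A\subset\mathbb N$ there is $\int_Ax\,dm_T\in E$ with $x^*(\int_Ax\,dm_T)=\int_Ax\,dx^*m_T$ for all $x^*$. For $r\in(0,\infty)$, $\ell^r(m_T)=\{x\in\ell^0:|x|^r\in\ell^1(m_T)\}$. *)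

theory Defs
  imports "HOL-Analysis.Analysis"
begin

definition ell1 :: "(nat \<Rightarrow> real) set" where
  "ell1 = {x. summable (\<lambda>n. \<bar>x n\<bar>)}"

definition unitseq :: "nat \<Rightarrow> nat \<Rightarrow> real" where
  "unitseq n = (\<lambda>k. if k = n then 1 else 0)"

text \<open>T : ell^1 -> E is a continuous (bounded) linear operator; only values on ell^1 matter.\<close>
definition bounded_linear_on_ell1 :: "((nat \<Rightarrow> real) \<Rightarrow> 'e::real_normed_vector) \<Rightarrow> bool" where
  "bounded_linear_on_ell1 T \<longleftrightarrow>
     (\<forall>x\<in>ell1. \<forall>y\<in>ell1. T (\<lambda>n. x n + y n) = T x + T y) \<and>
     (\<forall>x\<in>ell1. \<forall>c. T (\<lambda>n. c * x n) = c *\<^sub>R T x) \<and>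
     (\<exists>K. \<forall>x\<in>ell1. norm (T x) \<le> K * (\<Sum>n. \<bar>x n\<bar>))"

text \<open>Variation measure |x* m_T| on P(N): the counting measure with density |x*(T e_j)|.\<close>
definition var_meas :: "((nat \<Rightarrow> real) \<Rightarrow> 'e::real_normed_vector) \<Rightarrow> ('e \<Rightarrow> real) \<Rightarrow> nat measure" where
  "var_meas T x' = density (count_space UNIV) (\<lambda>j. ennreal \<bar>x' (T (unitseq j))\<bar>)"

text \<open>Integral over A of x with respect to the scalar measure x* m_T (point masses x*(T e_j)).\<close>
definition scal_int :: "((nat \<Rightarrow> real) \<Rightarrow> 'e::real_normed_vector) \<Rightarrow> ('e \<Rightarrow> real) \<Rightarrow> nat set \<Rightarrow> (nat \<Rightarrow> real) \<Rightarrow> real" where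
  "scal_int T x' A x = (LINT j|count_space UNIV. indicator A j * (x j * x' (T (unitseq j))))"

definition ell1_mT :: "((nat \<Rightarrow> real) \<Rightarrow> 'e::real_normed_vector) \<Rightarrow> (nat \<Rightarrow> real) set" where
  "ell1_mT T = {x. (\<forall>x'. bounded_linear x' \<longrightarrow> integrable (var_meas T x') x) \<and>
      (\<forall>A. \<exists>v::'e. \<forall>x'. bounded_linear x' \<longrightarrow> x' v = scal_int T x' A x)}"

definition ellr_mT :: "((nat \<Rightarrow> real) \<Rightarrow> 'e::real_normed_vector) \<Rightarrow> real \<Rightarrow> (nat \<Rightarrow> real) set" where
  "ellr_mT T r = {x. (\<lambda>j. \<bar>x j\<bar> powr r) \<in> ell1_mT T}"

definition r_power_dominated :: "((nat \<Rightarrow> real) \<Rightarrow> 'e::real_normed_vector) \<Rightarrow> real \<Rightarrow> bool" where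
  "r_power_dominated T r \<longleftrightarrow> (\<exists>C>0. \<forall>F x. finite F \<longrightarrow> (\<forall>j\<in>F. x j \<ge> (0::real)) \<longrightarrow>
      norm (\<Sum>j\<in>F. (x j powr r) *\<^sub>R T (unitseq j)) powr (1 / r)
        \<le> C * (SUP N\<in>Pow F. norm (\<Sum>j\<in>N. x j *\<^sub>R T (unitseq j))))"

end

theory Submission
  imports Defs "HOL-Library.Diagonal_Subsequence"
begin

definition hb_valid :: "('a::real_vector \<Rightarrow> real) \<Rightarrow> 'a \<Rightarrow> real \<Rightarrow> ('a \<times> real) set \<Rightarrow> bool" where
  "hb_valid p u c G \<longleftrightarrow>
    (\<forall>x y1 y2. (x,y1)\<in>G \<longrightarrow> (x,y2)\<in>G \<longrightarrow> y1 = y2) \<and> (u,c) \<in> G \<and>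
    (\<forall>x y x' y'. (x,y)\<in>G \<longrightarrow> (x',y')\<in>G \<longrightarrow> (x+x', y+y') \<in> G) \<and>
    (\<forall>x y t. (x,y)\<in>G \<longrightarrow> (t *\<^sub>R x, t*y) \<in> G) \<and>
    (\<forall>x y. (x,y)\<in>G \<longrightarrow> y \<le> p x)"

lemma hb_validI:
  assumes "\<And>x y1 y2. (x,y1)\<in>G \<Longrightarrow> (x,y2)\<in>G \<Longrightarrow> y1 = y2" "(u,c) \<in> G"
    "\<And>x y x' y'. (x,y)\<in>G \<Longrightarrow> (x',y')\<in>G \<Longrightarrow> (x+x', y+y') \<in> G"
    "\<And>x y t. (x,y)\<in>G \<Longrightarrow> (t *\<^sub>R x, t*y) \<in> G"
    "\<And>x y. (x,y)\<in>G \<Longrightarrow> y \<le> p x"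
  shows "hb_valid p u c G"
  using assms unfolding hb_valid_def by blast

lemma hb_validD:
  assumes "hb_valid p u c G"
  shows "\<And>x y1 y2. (x,y1)\<in>G \<Longrightarrow> (x,y2)\<in>G \<Longrightarrow> y1 = y2" "(u,c) \<in> G"
    "\<And>x y x' y'. (x,y)\<in>G \<Longrightarrow> (x',y')\<in>G \<Longrightarrow> (x+x', y+y') \<in> G"
    "\<And>x y t. (x,y)\<in>G \<Longrightarrow> (t *\<^sub>R x, t*y) \<in> G"
    "\<And>x y. (x,y)\<in>G \<Longrightarrow> y \<le> p x"
  using assms unfolding hb_valid_def by blast+

lemma hb_extend:
  fixes p :: "'a::real_vector \<Rightarrow> real"
  assumes sub: "\<And>x y. p (x+y) \<le> p x + p y"
    and hom: "\<And>x t. t > 0 \<Longrightarrow> p (t *\<^sub>R x) = t * p x"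
    and V: "hb_valid p u c G" and a: "a \<notin> fst ` G"
  shows "\<exists>G'. hb_valid p u c G' \<and> G \<subseteq> G' \<and> G' \<noteq> G"
proof -
  have fnc: "\<And>x y1 y2. (x,y1)\<in>G \<Longrightarrow> (x,y2)\<in>G \<Longrightarrow> y1 = y2"
    and uc: "(u,c)\<in>G"
    and add: "\<And>x y x' y'. (x,y)\<in>G \<Longrightarrow> (x',y')\<in>G \<Longrightarrow> (x+x', y+y') \<in> G"
    and scl: "\<And>x y t. (x,y)\<in>G \<Longrightarrow> (t *\<^sub>R x, t*y) \<in> G"
    and dom: "\<And>x y. (x,y)\<in>G \<Longrightarrow> y \<le> p x"
    using hb_validD[OF V] by blast+
  have z: "(0,0) \<in> G" using scl[OF uc, of 0] by simp
  define S where "S = {y - p (x - a) | x y. (x,y) \<in> G}"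
  have key: "y1 - p (x1 - a) \<le> p (x2 + a) - y2" if "(x1,y1)\<in>G" "(x2,y2)\<in>G" for x1 y1 x2 y2
  proof -
    have "y1 + y2 \<le> p (x1 + x2)" using dom[OF add[OF that]] by simp
    also have "\<dots> = p ((x1 - a) + (x2 + a))" by (simp add: algebra_simps)
    also have "\<dots> \<le> p (x1 - a) + p (x2 + a)" by (rule sub)
    finally show ?thesis by simp
  qed
  have Sne: "S \<noteq> {}" using z unfolding S_def by blast
  have Sbdd: "bdd_above S" unfolding S_def bdd_above_def using key[OF _ z] by force
  define d where "d = Sup S"
  have d1: "y - p (x - a) \<le> d" if "(x,y)\<in>G" for x y
    unfolding d_def by (rule cSup_upper[OF _ Sbdd]) (use that S_def in blast)
  have d2: "d \<le> p (x + a) - y" if "(x,y)\<in>G" for x y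
    unfolding d_def by (rule cSup_least[OF Sne]) (use key[OF _ that] S_def in blast)
  define G' where "G' = {(x + t *\<^sub>R a, y + t * d) | x y t. (x,y) \<in> G}"
  have sub': "G \<subseteq> G'"
  proof
    fix z assume "z \<in> G"
    then obtain x y where "z = (x,y)" "(x,y)\<in>G" by (cases z) auto
    moreover have "(x + 0 *\<^sub>R a, y + 0 * d) \<in> G'" unfolding G'_def using \<open>(x,y)\<in>G\<close> by blast
    ultimately show "z \<in> G'" by simp
  qed
  have ne: "G' \<noteq> G"
  proof
    assume "G' = G"
    have "(0 + 1 *\<^sub>R a, 0 + 1 * d) \<in> G'" unfolding G'_def using z by blast
    with \<open>G' = G\<close> have "(a, d) \<in> G" by simp
    with a show False by force
  qed
  have fun': "y1 = y2" if "(z,y1)\<in>G'" "(z,y2)\<in>G'" for z y1 y2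
  proof -
    from that(1) obtain x y t where 1: "z = x + t *\<^sub>R a" "y1 = y + t * d" "(x,y)\<in>G" unfolding G'_def by blast
    from that(2) obtain x' y' t' where 2: "z = x' + t' *\<^sub>R a" "y2 = y' + t' * d" "(x',y')\<in>G" unfolding G'_def by blast
    have "t = t'"
    proof (rule ccontr)
      assume ne: "t \<noteq> t'"
      have "(x' + (- 1) *\<^sub>R x, y' + (-1) * y) \<in> G" using add[OF 2(3) scl[OF 1(3)]] .
      then have "(x' - x, y' - y) \<in> G" by simp
      from scl[OF this, of "1/(t-t')"]
      have "((1/(t - t')) *\<^sub>R (x' - x), (1/(t-t')) * (y' - y)) \<in> G" .
      moreover have "(1/(t - t')) *\<^sub>R (x' - x) = a"
      proof -
        have "x' - x = (t - t') *\<^sub>R a" using 1(1) 2(1) by (simp add: algebra_simps)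
        then show ?thesis using ne by simp
      qed
      ultimately show False using a by force
    qed
    then have "x = x'" using 1(1) 2(1) by simp
    then have "y = y'" using fnc 1(3) 2(3) by blast
    then show ?thesis using 1 2 \<open>t = t'\<close> by simp
  qed
  have uc': "(u,c) \<in> G'" using sub' uc by blast
  have add': "(x+x', y+y') \<in> G'" if "(x,y)\<in>G'" "(x',y')\<in>G'" for x y x' y'
  proof -
    from that(1) obtain x1 y1 t1 where 1: "x = x1 + t1 *\<^sub>R a" "y = y1 + t1 * d" "(x1,y1)\<in>G" unfolding G'_def by blast
    from that(2) obtain x2 y2 t2 where 2: "x' = x2 + t2 *\<^sub>R a" "y' = y2 + t2 * d" "(x2,y2)\<in>G" unfolding G'_def by blast
    have "(x1+x2, y1+y2) \<in> G" by (rule add[OF 1(3) 2(3)])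
    then have "(x1+x2 + (t1+t2) *\<^sub>R a, (y1+y2) + (t1+t2)*d) \<in> G'" unfolding G'_def by blast
    moreover have "x1+x2 + (t1+t2) *\<^sub>R a = x + x'" "(y1+y2) + (t1+t2)*d = y + y'"
      using 1 2 by (simp_all add: algebra_simps)
    ultimately show ?thesis by simp
  qed
  have scl': "(t *\<^sub>R x, t*y) \<in> G'" if "(x,y)\<in>G'" for x y t
  proof -
    from that(1) obtain x1 y1 t1 where 1: "x = x1 + t1 *\<^sub>R a" "y = y1 + t1 * d" "(x1,y1)\<in>G" unfolding G'_def by blast
    have "(t *\<^sub>R x1, t*y1) \<in> G" by (rule scl[OF 1(3)])
    then have "(t *\<^sub>R x1 + (t*t1) *\<^sub>R a, t*y1 + (t*t1)*d) \<in> G'" unfolding G'_def by blast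
    moreover have "t *\<^sub>R x1 + (t*t1) *\<^sub>R a = t *\<^sub>R x" "t*y1 + (t*t1)*d = t * y"
      using 1 by (simp_all add: algebra_simps)
    ultimately show ?thesis by simp
  qed
  have dom': "y \<le> p x" if "(x,y)\<in>G'" for x y
  proof -
    from that(1) obtain x1 y1 t where 1: "x = x1 + t *\<^sub>R a" "y = y1 + t * d" "(x1,y1)\<in>G" unfolding G'_def by blast
    consider "t = 0" | "t > 0" | "t < 0" by linarith
    then show ?thesis
    proof cases
      case 1 then show ?thesis using \<open>x = _\<close> \<open>y = _\<close> dom[OF \<open>(x1,y1)\<in>G\<close>] by simp
    next
      case 2
      have "((1/t) *\<^sub>R x1, (1/t)*y1) \<in> G" by (rule scl[OF 1(3)])
      from d2[OF this] have "d \<le> p ((1/t) *\<^sub>R x1 + a) - y1/t" by simp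
      then have "t * d \<le> t * p ((1/t) *\<^sub>R x1 + a) - y1" using 2 by (simp add: field_simps)
      also have "t * p ((1/t) *\<^sub>R x1 + a) = p (t *\<^sub>R ((1/t) *\<^sub>R x1 + a))" using hom[OF 2] by simp
      also have "t *\<^sub>R ((1/t) *\<^sub>R x1 + a) = x" using 1(1) 2 by (simp add: algebra_simps)
      finally show ?thesis using 1(2) by simp
    next
      case 3
      define s where "s = - t"
      have s: "s > 0" using 3 s_def by simp
      have "((1/s) *\<^sub>R x1, (1/s)*y1) \<in> G" by (rule scl[OF 1(3)])
      from d1[OF this] have "y1/s - p ((1/s) *\<^sub>R x1 - a) \<le> d" by simp
      then have "y1 - s * p ((1/s) *\<^sub>R x1 - a) \<le> s * d" using s by (simp add: field_simps)
      also have "s * p ((1/s) *\<^sub>R x1 - a) = p (s *\<^sub>R ((1/s) *\<^sub>R x1 - a))" using hom[OF s] by simp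
      also have "s *\<^sub>R ((1/s) *\<^sub>R x1 - a) = x" using 1(1) s s_def by (simp add: algebra_simps)
      finally show ?thesis using 1(2) s_def by simp
    qed
  qed
  have "hb_valid p u c G'"
    by (rule hb_validI[OF fun' uc' add' scl' dom'])
  then show ?thesis using sub' ne by blast
qed

lemma hahn_banach:
  fixes p :: "'a::real_vector \<Rightarrow> real"
  assumes sub: "\<And>x y. p (x+y) \<le> p x + p y"
    and hom: "\<And>x t. t > 0 \<Longrightarrow> p (t *\<^sub>R x) = t * p x"
    and c1: "c \<le> p u" and c2: "- c \<le> p (- u)"
  shows "\<exists>f. linear f \<and> f u = c \<and> (\<forall>x. f x \<le> p x)"
proof -
  define A where "A = {G. hb_valid p u c G}"
  define G0 where "G0 = {(t *\<^sub>R u, t * c) | t. True}"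
  have p0: "p 0 = 0" using hom[of 2 0] by simp
  have G0v: "hb_valid p u c G0"
  proof -
    have dom0: "t * c \<le> p (t *\<^sub>R u)" for t
    proof -
      consider "t = 0" | "t > 0" | "t < 0" by linarith
      then show ?thesis
      proof cases
        case 1 then show ?thesis using p0 by simp
      next
        case 2 then show ?thesis using hom[OF 2, of u] c1 by (simp add: mult_left_mono)
      next
        case 3
        have "p (t *\<^sub>R u) = p ((-t) *\<^sub>R (-u))" by simp
        also have "\<dots> = (-t) * p (-u)" using hom[of "-t" "-u"] 3 by simp
        moreover have "(-t) * (-c) \<le> (-t) * p (-u)" using mult_left_mono[OF c2, of "-t"] 3 by simp
        ultimately show ?thesis by simp
      qed
    qed
    have fun0: "y1 = y2" if "(x,y1)\<in>G0" "(x,y2)\<in>G0" for x y1 y2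
    proof (cases "u = 0")
      case True
      then have "c \<le> 0" "-c \<le> 0" using c1 c2 p0 by auto
      then have "c = 0" by simp
      then show ?thesis using that unfolding G0_def by auto
    next
      case False
      from that(1) obtain t1 where "x = t1 *\<^sub>R u" "y1 = t1 * c" unfolding G0_def by blast
      moreover from that(2) obtain t2 where "x = t2 *\<^sub>R u" "y2 = t2 * c" unfolding G0_def by blast
      ultimately have "t1 = t2" using False by (metis scaleR_cancel_right)
      then show ?thesis using \<open>y1 = _\<close> \<open>y2 = _\<close> by simp
    qed
    have uc0: "(u,c) \<in> G0" unfolding G0_def by (auto intro!: exI[of _ 1])
    have add0: "(x+x', y+y') \<in> G0" if "(x,y)\<in>G0" "(x',y')\<in>G0" for x y x' y'
    proof -
      from that(1) obtain t1 where "x = t1 *\<^sub>R u" "y = t1 * c" unfolding G0_def by blast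
      moreover from that(2) obtain t2 where "x' = t2 *\<^sub>R u" "y' = t2 * c" unfolding G0_def by blast
      ultimately show ?thesis unfolding G0_def
        by (auto intro!: exI[of _ "t1+t2"] simp: algebra_simps)
    qed
    have scl0: "(t *\<^sub>R x, t*y) \<in> G0" if "(x,y)\<in>G0" for x y t
    proof -
      from that(1) obtain t1 where "x = t1 *\<^sub>R u" "y = t1 * c" unfolding G0_def by blast
      then show ?thesis unfolding G0_def
        by (auto intro!: exI[of _ "t*t1"] simp: algebra_simps)
    qed
    have dom0': "y \<le> p x" if "(x,y)\<in>G0" for x y
      using that dom0 unfolding G0_def by blast
    show ?thesis by (rule hb_validI[OF fun0 uc0 add0 scl0 dom0'])
  qed
  have "\<exists>M\<in>A. \<forall>X\<in>A. M \<subseteq> X \<longrightarrow> X = M"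
  proof (rule Zorn_Lemma2, intro ballI)
    fix C assume C: "C \<in> chains A"
    show "\<exists>U\<in>A. \<forall>X\<in>C. X \<subseteq> U"
    proof (cases "C = {}")
      case True then show ?thesis using G0v A_def by blast
    next
      case False
      have CA: "C \<subseteq> A" using C chainsD2 by blast
      have tot: "X \<subseteq> Y \<or> Y \<subseteq> X" if "X\<in>C" "Y\<in>C" for X Y using chainsD[OF C that] .
      have V: "hb_valid p u c X" if "X \<in> C" for X using CA that A_def by blast
      have two: "\<exists>Z\<in>C. X \<subseteq> Z \<and> Y \<subseteq> Z" if "X\<in>C" "Y\<in>C" for X Y
        using tot[OF that] that by blast
      have "hb_valid p u c (\<Union>C)"
      proof (rule hb_validI)
        fix x y1 y2 assume "(x,y1) \<in> \<Union>C" "(x,y2) \<in> \<Union>C"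
        then obtain X Y where "X\<in>C" "Y\<in>C" "(x,y1)\<in>X" "(x,y2)\<in>Y" by blast
        then obtain Z where "Z\<in>C" "(x,y1)\<in>Z" "(x,y2)\<in>Z" using two by blast
        then show "y1 = y2" using hb_validD[OF V] by blast
      next
        obtain X where "X \<in> C" using False by blast
        then show "(u,c) \<in> \<Union>C" using hb_validD[OF V] by blast
      next
        fix x y x' y' assume "(x,y) \<in> \<Union>C" "(x',y') \<in> \<Union>C"
        then obtain X Y where "X\<in>C" "Y\<in>C" "(x,y)\<in>X" "(x',y')\<in>Y" by blast
        then obtain Z where "Z\<in>C" "(x,y)\<in>Z" "(x',y')\<in>Z" using two by blast
        then show "(x+x', y+y') \<in> \<Union>C" using hb_validD[OF V] by blast
      next
        fix x y t assume "(x,y) \<in> \<Union>C"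
        then obtain X where "X\<in>C" "(x,y)\<in>X" by blast
        then show "(t *\<^sub>R x, t*y) \<in> \<Union>C" using hb_validD[OF V] by blast
      next
        fix x y assume "(x,y) \<in> \<Union>C"
        then obtain X where "X\<in>C" "(x,y)\<in>X" by blast
        then show "y \<le> p x" using hb_validD[OF V] by blast
      qed
      then show ?thesis using A_def by blast
    qed
  qed
  then obtain M where MA: "M \<in> A" and Mmax: "\<And>X. X \<in> A \<Longrightarrow> M \<subseteq> X \<Longrightarrow> X = M" by blast
  have MV: "hb_valid p u c M" using MA A_def by blast
  have full: "x \<in> fst ` M" for x
  proof (rule ccontr)
    assume "x \<notin> fst ` M"
    from hb_extend[OF sub hom MV this] obtain G' where "hb_valid p u c G'" "M \<subseteq> G'" "G' \<noteq> M" by blast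
    then show False using Mmax A_def by blast
  qed
  have fnc: "\<And>x y1 y2. (x,y1)\<in>M \<Longrightarrow> (x,y2)\<in>M \<Longrightarrow> y1 = y2"
    and uc: "(u,c)\<in>M"
    and add: "\<And>x y x' y'. (x,y)\<in>M \<Longrightarrow> (x',y')\<in>M \<Longrightarrow> (x+x', y+y') \<in> M"
    and scl: "\<And>x y t. (x,y)\<in>M \<Longrightarrow> (t *\<^sub>R x, t*y) \<in> M"
    and dom: "\<And>x y. (x,y)\<in>M \<Longrightarrow> y \<le> p x"
    using hb_validD[OF MV] by blast+
  define f where "f x = (THE y. (x,y) \<in> M)" for x
  have fM: "(x, f x) \<in> M" for x
  proof -
    obtain y where "(x,y)\<in>M" using full[of x] by force
    then show ?thesis unfolding f_def by (rule theI) (use fnc \<open>(x,y)\<in>M\<close> in blast)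
  qed
  have fe: "f x = y" if "(x,y)\<in>M" for x y using fnc[OF fM that] .
  have "linear f"
  proof (rule linearI)
    fix b1 b2 show "f (b1 + b2) = f b1 + f b2" by (rule fe[OF add[OF fM fM]])
  next
    fix r b show "f (r *\<^sub>R b) = r *\<^sub>R f b" using fe[OF scl[OF fM]] by simp
  qed
  moreover have "f u = c" using fe[OF uc] .
  moreover have "\<forall>x. f x \<le> p x" using dom fM by blast
  ultimately show ?thesis by blast
qed


lemma norming_functional:
  fixes v :: "'a::real_normed_vector"
  shows "\<exists>f. bounded_linear f \<and> f v = norm v \<and> (\<forall>w. \<bar>f w\<bar> \<le> norm w)"
proof -
  obtain f where f: "linear f" "f v = norm v" "\<forall>x. f x \<le> norm x"
    using hahn_banach[of norm "norm v" v] by (auto intro: norm_triangle_ineq)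
  have ab: "\<bar>f w\<bar> \<le> norm w" for w
  proof -
    have "f (- w) \<le> norm (-w)" using f(3) by blast
    then have "- f w \<le> norm w" using linear_neg[OF f(1)] by simp
    then show ?thesis using f(3) by (simp add: abs_le_iff)
  qed
  have "bounded_linear f"
    by (rule bounded_linear_intro[of _ 1]) (use linear_add[OF f(1)] linear_scale[OF f(1)] ab in auto)
  then show ?thesis using f ab by blast
qed

lemma infdist_add_subspace:
  fixes V :: "'a::real_normed_vector set"
  assumes "subspace V"
  shows "infdist (x + y) V \<le> infdist x V + infdist y V"
proof -
  have ne: "V \<noteq> {}" using assms subspace_0 by blast
  have "infdist (x+y) V - dist y a2 \<le> infdist x V" if a2: "a2 \<in> V" for a2
  proof -
    have "infdist (x+y) V - dist y a2 \<le> dist x a1" if a1: "a1 \<in> V" for a1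
    proof -
      have "a1 + a2 \<in> V" using assms a1 a2 subspace_add by blast
      then have "infdist (x+y) V \<le> dist (x+y) (a1+a2)" by (rule infdist_le)
      also have "\<dots> \<le> dist x a1 + dist y a2" unfolding dist_norm
        using norm_triangle_ineq[of "x - a1" "y - a2"] by (simp add: algebra_simps)
      finally show ?thesis by simp
    qed
    then show ?thesis unfolding infdist_notempty[OF ne] by (intro cINF_greatest ne) auto
  qed
  then have "infdist (x+y) V - infdist x V \<le> dist y a2" if "a2 \<in> V" for a2 using that by force
  then have "infdist (x+y) V - infdist x V \<le> infdist y V"
    unfolding infdist_notempty[OF ne, of y] by (intro cINF_greatest ne) auto
  then show ?thesis by simp
qed

lemma infdist_scale_le:
  fixes V :: "'a::real_normed_vector set"
  assumes "subspace V" "t > 0"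
  shows "infdist (t *\<^sub>R x) V \<le> t * infdist x V"
proof -
  have ne: "V \<noteq> {}" using assms subspace_0 by blast
  have "infdist (t *\<^sub>R x) V / t \<le> dist x a" if a: "a \<in> V" for a
  proof -
    have "t *\<^sub>R a \<in> V" using assms a subspace_scale by blast
    then have "infdist (t *\<^sub>R x) V \<le> dist (t *\<^sub>R x) (t *\<^sub>R a)" by (rule infdist_le)
    also have "\<dots> = t * dist x a" unfolding dist_norm using assms(2)
      by (simp add: scaleR_diff_right[symmetric])
    finally show ?thesis using assms(2) by (simp add: field_simps)
  qed
  then have "infdist (t *\<^sub>R x) V / t \<le> infdist x V"
    unfolding infdist_notempty[OF ne, of x] by (intro cINF_greatest ne) auto
  then show ?thesis using assms(2) by (simp add: field_simps)
qed

lemma infdist_scale: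
  fixes V :: "'a::real_normed_vector set"
  assumes "subspace V" "t > 0"
  shows "infdist (t *\<^sub>R x) V = t * infdist x V"
proof -
  have "infdist x V = infdist ((1/t) *\<^sub>R (t *\<^sub>R x)) V" using assms(2) by simp
  also have "\<dots> \<le> (1/t) * infdist (t *\<^sub>R x) V"
    by (rule infdist_scale_le[OF assms(1)]) (use assms(2) in simp)
  finally have "t * infdist x V \<le> infdist (t *\<^sub>R x) V" using assms(2) by (simp add: field_simps)
  then show ?thesis using infdist_scale_le[OF assms, of x] by linarith
qed

lemma infdist_uminus:
  fixes V :: "'a::real_normed_vector set"
  assumes "subspace V"
  shows "infdist (- x) V \<le> infdist x V"
proof -
  have ne: "V \<noteq> {}" using assms subspace_0 by blast
  have "infdist (- x) V \<le> dist x a" if a: "a \<in> V" for a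
  proof -
    have "- a \<in> V" using assms a subspace_neg by blast
    then have "infdist (- x) V \<le> dist (- x) (- a)" by (rule infdist_le)
    also have "\<dots> = dist x a" unfolding dist_norm by (metis minus_diff_eq norm_minus_cancel diff_minus_eq_add uminus_add_conv_diff)
    finally show ?thesis .
  qed
  then show ?thesis unfolding infdist_notempty[OF ne, of x] by (intro cINF_greatest ne) auto
qed

lemma separation_functional:
  fixes V :: "'a::real_normed_vector set"
  assumes "subspace V" "closed V" "u \<notin> V"
  shows "\<exists>f::'a \<Rightarrow> real. bounded_linear f \<and> (\<forall>v\<in>V. f v = 0) \<and> f u \<noteq> 0"
proof -
  have ne: "V \<noteq> {}" using assms subspace_0 by blast
  have pos: "infdist u V > 0" using infdist_pos_not_in_closed[OF assms(2) ne assms(3)] .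
  have um: "infdist (-u) V = infdist u V"
    using infdist_uminus[OF assms(1), of u] infdist_uminus[OF assms(1), of "-u"] by simp
  have c2: "- infdist u V \<le> infdist (-u) V" using um infdist_nonneg[of u V] by simp
  obtain f where f: "linear f" "f u = infdist u V" "\<forall>x. f x \<le> infdist x V"
    using hahn_banach[of "\<lambda>x. infdist x V" "infdist u V" u, OF infdist_add_subspace[OF assms(1)]
      infdist_scale[OF assms(1)] order.refl c2] by blast
  have le: "infdist w V \<le> norm w" for w
    using infdist_le[OF subspace_0[OF assms(1)], of w] by simp
  have ab: "\<bar>f w\<bar> \<le> norm w" for w
  proof -
    have "f (- w) \<le> infdist (-w) V" using f(3) by blast
    then have "- f w \<le> norm w" using linear_neg[OF f(1)] le[of "-w"] by simp
    moreover have "f w \<le> norm w" using f(3) le[of w] order.trans by blast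
    ultimately show ?thesis by (simp add: abs_le_iff)
  qed
  have "bounded_linear f"
    by (rule bounded_linear_intro[of _ 1]) (use linear_add[OF f(1)] linear_scale[OF f(1)] ab in auto)
  moreover have "f v = 0" if "v \<in> V" for v
  proof -
    have "f v \<le> 0" using f(3) that by (metis infdist_zero)
    moreover have "f (-v) \<le> 0" using f(3) that assms(1) subspace_neg by (metis infdist_zero)
    ultimately show ?thesis using linear_neg[OF f(1)] by simp
  qed
  ultimately show ?thesis using f(2) pos by (intro exI[of _ f]) auto
qed


lemma tail_bound:
  fixes r h :: "nat \<Rightarrow> real"
  assumes r: "summable (\<lambda>k. \<bar>r k\<bar>)" and h: "\<And>k. \<bar>h k\<bar> \<le> 1"
  shows "summable (\<lambda>k. h (k+Q) * r (k+Q))" "\<bar>\<Sum>k. h (k+Q) * r (k+Q)\<bar> \<le> (\<Sum>k. \<bar>r (k+Q)\<bar>)"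
proof -
  have s: "summable (\<lambda>k. \<bar>r (k+Q)\<bar>)" using summable_ignore_initial_segment[OF r, of Q] .
  have le: "\<bar>h (k+Q) * r (k+Q)\<bar> \<le> \<bar>r (k+Q)\<bar>" for k
    using h[of "k+Q"] by (simp add: abs_mult mult_left_le_one_le)
  have sa: "summable (\<lambda>k. \<bar>h (k+Q) * r (k+Q)\<bar>)"
    by (rule summable_comparison_test'[OF s]) (use le in auto)
  show "summable (\<lambda>k. h (k+Q) * r (k+Q))" using summable_rabs_cancel[OF sa] .
  have "\<bar>\<Sum>k. h (k+Q) * r (k+Q)\<bar> \<le> (\<Sum>k. \<bar>h (k+Q) * r (k+Q)\<bar>)" by (rule summable_rabs[OF sa])
  also have "\<dots> \<le> (\<Sum>k. \<bar>r (k+Q)\<bar>)" by (rule suminf_le[OF le sa s])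
  finally show "\<bar>\<Sum>k. h (k+Q) * r (k+Q)\<bar> \<le> (\<Sum>k. \<bar>r (k+Q)\<bar>)" .
qed

lemma tail_small:
  fixes r :: "nat \<Rightarrow> real"
  assumes "summable (\<lambda>k. \<bar>r k\<bar>)" "d > 0"
  shows "\<exists>Q0. \<forall>Q\<ge>Q0. (\<Sum>k. \<bar>r (k+Q)\<bar>) \<le> d"
  using suminf_exist_split[OF assms(2) assms(1)] by (metis less_imp_le real_norm_def abs_le_iff)

lemma phillips_diag:
  fixes \<rho> :: "nat \<Rightarrow> nat \<Rightarrow> real"
  assumes rows: "\<And>i. summable (\<lambda>k. \<bar>\<rho> i k\<bar>)"
    and cau: "\<And>B. Cauchy (\<lambda>i. \<Sum>k. indicator B k * \<rho> i k)"
  shows "(\<lambda>i. \<rho> i i) \<longlonglongrightarrow> 0"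
proof (rule ccontr)
  assume nc: "\<not> (\<lambda>i. \<rho> i i) \<longlonglongrightarrow> 0"
  obtain \<epsilon> where \<epsilon>: "\<epsilon> > 0" and big: "\<And>N. \<exists>i\<ge>N. \<epsilon> \<le> \<bar>\<rho> i i\<bar>"
    using nc unfolding LIMSEQ_iff by (auto simp: not_less)
  have colcau: "Cauchy (\<lambda>i. \<rho> i k)" for k
  proof -
    have "(\<Sum>k'. indicator {k} k' * \<rho> i k') = \<rho> i k" for i
    proof -
      have "(\<lambda>k'. indicator {k} k' * \<rho> i k') = (\<lambda>k'. if k' = k then \<rho> i k' else 0)"
        by (auto simp: indicator_def)
      then show ?thesis using sums_single[of k "\<rho> i"] sums_unique by metis
    qed
    then show ?thesis using cau[of "{k}"] by simp
  qed
  have col: "\<exists>N>M. \<forall>p q. N \<le> p \<longrightarrow> N \<le> q \<longrightarrow> (\<forall>k\<le>M. \<bar>\<rho> q k - \<rho> p k\<bar> \<le> \<delta>)" if "\<delta> > 0" for M \<delta>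
  proof -
    have ev: "eventually (\<lambda>N. \<forall>p q. N \<le> p \<longrightarrow> N \<le> q \<longrightarrow> \<bar>\<rho> q k - \<rho> p k\<bar> \<le> \<delta>) sequentially" for k
    proof -
      obtain N0 where N0: "\<And>m n. m \<ge> N0 \<Longrightarrow> n \<ge> N0 \<Longrightarrow> dist (\<rho> m k) (\<rho> n k) < \<delta>"
        using colcau[of k] \<open>\<delta> > 0\<close> unfolding Cauchy_def by blast
      show ?thesis unfolding eventually_sequentially
      proof (rule exI[of _ N0], intro allI impI)
        fix n p q assume "N0 \<le> n" "n \<le> p" "n \<le> q"
        then have "dist (\<rho> q k) (\<rho> p k) < \<delta>" by (intro N0) auto
        then show "\<bar>\<rho> q k - \<rho> p k\<bar> \<le> \<delta>" by (simp add: dist_real_def)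
      qed
    qed
    have "eventually (\<lambda>N. \<forall>k\<in>{..M}. \<forall>p q. N \<le> p \<longrightarrow> N \<le> q \<longrightarrow> \<bar>\<rho> q k - \<rho> p k\<bar> \<le> \<delta>) sequentially"
      by (rule eventually_ball_finite) (use ev in auto)
    then obtain N0 where N0: "\<And>N. N \<ge> N0 \<Longrightarrow> \<forall>k\<in>{..M}. \<forall>p q. N \<le> p \<longrightarrow> N \<le> q \<longrightarrow> \<bar>\<rho> q k - \<rho> p k\<bar> \<le> \<delta>"
      unfolding eventually_sequentially by blast
    show ?thesis
      by (rule exI[of _ "max N0 (Suc M)"]) (use N0[of "max N0 (Suc M)"] in auto)
  qed
  define Nf where "Nf M = (SOME N. N > M \<and> (\<forall>p q. N \<le> p \<longrightarrow> N \<le> q \<longrightarrow> (\<forall>k\<le>M. \<bar>\<rho> q k - \<rho> p k\<bar> \<le> \<epsilon>/(8*(M+1)))))" for M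
  have Nf: "Nf M > M" "\<And>p q k. Nf M \<le> p \<Longrightarrow> Nf M \<le> q \<Longrightarrow> k \<le> M \<Longrightarrow> \<bar>\<rho> q k - \<rho> p k\<bar> \<le> \<epsilon>/(8*(M+1))" for M
  proof -
    have "\<epsilon>/(8*(M+1)) > 0" using \<epsilon> by simp
    from someI_ex[OF col[OF this, of M]]
    show "Nf M > M" "\<And>p q k. Nf M \<le> p \<Longrightarrow> Nf M \<le> q \<Longrightarrow> k \<le> M \<Longrightarrow> \<bar>\<rho> q k - \<rho> p k\<bar> \<le> \<epsilon>/(8*(M+1))"
      unfolding Nf_def by blast+
  qed
  define qf where "qf M = (SOME q. q \<ge> Nf M \<and> \<epsilon> \<le> \<bar>\<rho> q q\<bar> \<and> (\<Sum>k. \<bar>\<rho> (Nf M) (k+q)\<bar>) \<le> \<epsilon>/8)" for M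
  have qf: "qf M \<ge> Nf M" "\<epsilon> \<le> \<bar>\<rho> (qf M) (qf M)\<bar>" "(\<Sum>k. \<bar>\<rho> (Nf M) (k + qf M)\<bar>) \<le> \<epsilon>/8" for M
  proof -
    obtain Q0 where Q0: "\<And>Q. Q \<ge> Q0 \<Longrightarrow> (\<Sum>k. \<bar>\<rho> (Nf M) (k+Q)\<bar>) \<le> \<epsilon>/8"
      using tail_small[OF rows[of "Nf M"], of "\<epsilon>/8"] \<epsilon> by auto
    obtain i where "i \<ge> max Q0 (Nf M)" "\<epsilon> \<le> \<bar>\<rho> i i\<bar>" using big by blast
    then have ex: "\<exists>q. q \<ge> Nf M \<and> \<epsilon> \<le> \<bar>\<rho> q q\<bar> \<and> (\<Sum>k. \<bar>\<rho> (Nf M) (k+q)\<bar>) \<le> \<epsilon>/8"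
      using Q0[of i] by auto
    from someI_ex[OF ex]
    show "qf M \<ge> Nf M" "\<epsilon> \<le> \<bar>\<rho> (qf M) (qf M)\<bar>" "(\<Sum>k. \<bar>\<rho> (Nf M) (k + qf M)\<bar>) \<le> \<epsilon>/8"
      unfolding qf_def by blast+
  qed
  define Mf where "Mf M = (SOME M'. M' \<ge> qf M \<and> (\<Sum>k. \<bar>\<rho> (qf M) (k + Suc M')\<bar>) \<le> \<epsilon>/8 \<and> (\<Sum>k. \<bar>\<rho> (Nf M) (k + Suc M')\<bar>) \<le> \<epsilon>/8)" for M
  have Mf: "Mf M \<ge> qf M" "(\<Sum>k. \<bar>\<rho> (qf M) (k + Suc (Mf M))\<bar>) \<le> \<epsilon>/8" "(\<Sum>k. \<bar>\<rho> (Nf M) (k + Suc (Mf M))\<bar>) \<le> \<epsilon>/8" for M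
  proof -
    obtain Q1 where Q1: "\<And>Q. Q \<ge> Q1 \<Longrightarrow> (\<Sum>k. \<bar>\<rho> (qf M) (k+Q)\<bar>) \<le> \<epsilon>/8"
      using tail_small[OF rows[of "qf M"], of "\<epsilon>/8"] \<epsilon> by auto
    obtain Q2 where Q2: "\<And>Q. Q \<ge> Q2 \<Longrightarrow> (\<Sum>k. \<bar>\<rho> (Nf M) (k+Q)\<bar>) \<le> \<epsilon>/8"
      using tail_small[OF rows[of "Nf M"], of "\<epsilon>/8"] \<epsilon> by auto
    have ex: "\<exists>M'. M' \<ge> qf M \<and> (\<Sum>k. \<bar>\<rho> (qf M) (k + Suc M')\<bar>) \<le> \<epsilon>/8 \<and> (\<Sum>k. \<bar>\<rho> (Nf M) (k + Suc M')\<bar>) \<le> \<epsilon>/8"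
      using Q1[of "Suc (max (qf M) (max Q1 Q2))"] Q2[of "Suc (max (qf M) (max Q1 Q2))"]
      by (intro exI[of _ "max (qf M) (max Q1 Q2)"]) simp
    from someI_ex[OF ex]
    show "Mf M \<ge> qf M" "(\<Sum>k. \<bar>\<rho> (qf M) (k + Suc (Mf M))\<bar>) \<le> \<epsilon>/8" "(\<Sum>k. \<bar>\<rho> (Nf M) (k + Suc (Mf M))\<bar>) \<le> \<epsilon>/8"
      unfolding Mf_def by blast+
  qed
  define Ms where "Ms j = (Mf ^^ j) 0" for j
  have MsS: "Ms (Suc j) = Mf (Ms j)" for j unfolding Ms_def by simp
  define qs where "qs j = qf (Ms j)" for j
  define ps where "ps j = Nf (Ms j)" for j
  have qs_in: "Ms j < qs j" "qs j \<le> Ms (Suc j)" for j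
    using Nf(1)[of "Ms j"] qf(1)[of "Ms j"] Mf(1)[of "Ms j"] unfolding qs_def MsS by auto
  have Ms_mono: "strict_mono Ms"
    unfolding strict_mono_Suc_iff using qs_in by (meson le_less_trans less_le_trans order.strict_implies_order qs_in(1) qs_in(2) less_le_not_le not_le)
  define B where "B = range qs"
  have Bint: "B \<inter> {Suc (Ms j)..<Suc (Ms (Suc j))} = {qs j}" for j
  proof (intro equalityI subsetI)
    fix k assume k: "k \<in> B \<inter> {Suc (Ms j)..<Suc (Ms (Suc j))}"
    then obtain m where m: "k = qs m" unfolding B_def by blast
    have "m = j"
    proof (rule ccontr)
      assume "m \<noteq> j"
      then consider "m < j" | "j < m" by linarith
      then show False
      proof cases
        case 1
        then have "Suc m \<le> j" by simp
        then have "Ms (Suc m) \<le> Ms j" using strict_mono_less_eq[OF Ms_mono] by blast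
        then show False using qs_in(2)[of m] k m by auto
      next
        case 2
        then have "Suc j \<le> m" by simp
        then have "Ms (Suc j) \<le> Ms m" using strict_mono_less_eq[OF Ms_mono] by blast
        then show False using qs_in(1)[of m] k m by auto
      qed
    qed
    then show "k \<in> {qs j}" using m by simp
  next
    fix k assume "k \<in> {qs j}"
    then show "k \<in> B \<inter> {Suc (Ms j)..<Suc (Ms (Suc j))}" using qs_in[of j] unfolding B_def by auto
  qed
  define F where "F i = (\<Sum>k. indicator B k * \<rho> i k)" for i
  have split: "F i = (\<Sum>k<Suc (Ms j). indicator B k * \<rho> i k) + \<rho> i (qs j) + (\<Sum>k. indicator B (k + Suc (Ms (Suc j))) * \<rho> i (k + Suc (Ms (Suc j))))" for i j
  proof -
    have hb: "\<bar>indicator B k\<bar> \<le> (1::real)" for k by (simp add: indicator_def)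
    have sm: "summable (\<lambda>k. indicator B k * \<rho> i k)"
      using tail_bound(1)[of "\<rho> i" "indicator B", OF rows[of i] hb, where Q=0] by simp
    have "F i = (\<Sum>k. indicator B (k + Suc (Ms (Suc j))) * \<rho> i (k + Suc (Ms (Suc j)))) + (\<Sum>k<Suc (Ms (Suc j)). indicator B k * \<rho> i k)"
      unfolding F_def by (rule suminf_split_initial_segment[OF sm])
    moreover have "(\<Sum>k<Suc (Ms (Suc j)). indicator B k * \<rho> i k) = (\<Sum>k<Suc (Ms j). indicator B k * \<rho> i k) + (\<Sum>k\<in>{Suc (Ms j)..<Suc (Ms (Suc j))}. indicator B k * \<rho> i k)"
    proof -
      have "Suc (Ms j) \<le> Suc (Ms (Suc j))" using Ms_mono by (simp add: strict_mono_less_eq)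
      then show ?thesis by (metis atLeast0LessThan sum.atLeastLessThan_concat zero_le)
    qed
    moreover have "(\<Sum>k\<in>{Suc (Ms j)..<Suc (Ms (Suc j))}. indicator B k * \<rho> i k) = \<rho> i (qs j)"
    proof -
      have "(\<Sum>k\<in>{Suc (Ms j)..<Suc (Ms (Suc j))}. indicator B k * \<rho> i k) = (\<Sum>k\<in>{Suc (Ms j)..<Suc (Ms (Suc j))}. if k \<in> B then \<rho> i k else 0)"
        by (intro sum.cong) (auto simp: indicator_def)
      also have "\<dots> = (\<Sum>k\<in>{Suc (Ms j)..<Suc (Ms (Suc j))} \<inter> B. \<rho> i k)"
        by (simp add: sum.inter_restrict)
      finally have "(\<Sum>k\<in>{Suc (Ms j)..<Suc (Ms (Suc j))}. indicator B k * \<rho> i k) = (\<Sum>k\<in>B \<inter> {Suc (Ms j)..<Suc (Ms (Suc j))}. \<rho> i k)"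
        by (simp add: Int_commute)
      then show ?thesis using Bint by simp
    qed
    ultimately show ?thesis by simp
  qed
  have gap: "\<bar>F (qs j) - F (ps j)\<bar> \<ge> \<epsilon>/2" for j
  proof -
    define M where "M = Ms j"
    define M' where "M' = Ms (Suc j)"
    have M'eq: "M' = Mf M" unfolding M_def M'_def MsS ..
    define q where "q = qs j"
    define p where "p = ps j"
    have pN: "p = Nf M" unfolding p_def ps_def M_def ..
    have qq: "q = qf M" unfolding q_def qs_def M_def ..
    have hb: "\<bar>indicator B k\<bar> \<le> (1::real)" for k by (simp add: indicator_def)
    define A1 where "A1 i = (\<Sum>k<Suc M. indicator B k * \<rho> i k)" for i
    define T where "T i = (\<Sum>k. indicator B (k + Suc M') * \<rho> i (k + Suc M'))" for i
    have Fq: "F q = A1 q + \<rho> q q + T q" and Fp: "F p = A1 p + \<rho> p q + T p"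
      using split[of q j] split[of p j] unfolding A1_def T_def M_def M'_def q_def by simp_all
    have d1: "\<bar>A1 q - A1 p\<bar> \<le> \<epsilon>/8"
    proof -
      have "\<bar>A1 q - A1 p\<bar> = \<bar>\<Sum>k<Suc M. indicator B k * (\<rho> q k - \<rho> p k)\<bar>"
        unfolding A1_def by (simp only: sum_subtractf[symmetric] right_diff_distrib)
      also have "\<dots> \<le> (\<Sum>k<Suc M. \<bar>indicator B k * (\<rho> q k - \<rho> p k)\<bar>)" by (rule sum_abs)
      also have "\<dots> \<le> (\<Sum>k<Suc M. \<epsilon>/(8*(M+1)))"
      proof (rule sum_mono)
        fix k assume "k \<in> {..<Suc M}"
        then have "k \<le> M" by simp
        have dk: "\<bar>\<rho> q k - \<rho> p k\<bar> \<le> \<epsilon>/(8*(M+1))"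
          by (rule Nf(2)[of M p q k]) (use \<open>k \<le> M\<close> qf(1)[of M] pN qq in auto)
        then show "\<bar>indicator B k * (\<rho> q k - \<rho> p k)\<bar> \<le> \<epsilon>/(8*(M+1))"
        proof -
          have "\<bar>indicator B k * (\<rho> q k - \<rho> p k)\<bar> \<le> \<bar>\<rho> q k - \<rho> p k\<bar>"
            using hb[of k] by (simp add: abs_mult mult_left_le_one_le)
          then show ?thesis using dk by linarith
        qed
      qed
      also have "\<dots> = \<epsilon>/8"
      proof -
        have "(1 + real M) * \<epsilon> * 8 / (8 + 8 * real M) = \<epsilon>"
          by (simp add: field_simps)
        then show ?thesis by simp
      qed
      finally show ?thesis .
    qed
    have tq: "\<bar>T q\<bar> \<le> \<epsilon>/8"
      using tail_bound(2)[of "\<rho> q" "indicator B", OF rows[of q] hb, where Q="Suc M'"] Mf(2)[of M] unfolding T_def M'eq qq by linarith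
    have tp: "\<bar>T p\<bar> \<le> \<epsilon>/8"
      using tail_bound(2)[of "\<rho> p" "indicator B", OF rows[of p] hb, where Q="Suc M'"] Mf(3)[of M] unfolding T_def M'eq pN by linarith
    have mp: "\<bar>\<rho> p q\<bar> \<le> \<epsilon>/8"
    proof -
      have s: "summable (\<lambda>k. \<bar>\<rho> p (k + q)\<bar>)" using summable_ignore_initial_segment[OF rows[of p]] .
      have "\<bar>\<rho> p q\<bar> = \<bar>\<rho> p (0 + q)\<bar>" by simp
      also have "\<dots> \<le> (\<Sum>k. \<bar>\<rho> p (k + q)\<bar>)"
        using sum_le_suminf[OF s, of "{0}"] by simp
      also have "\<dots> \<le> \<epsilon>/8" using qf(3)[of M] pN qq by simp
      finally show ?thesis .
    qed
    have big': "\<epsilon> \<le> \<bar>\<rho> q q\<bar>" using qf(2)[of M] qq by simp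
    have "F q - F p = (A1 q - A1 p) + \<rho> q q - \<rho> p q + T q - T p" using Fq Fp by simp
    then show ?thesis using d1 tq tp mp big' unfolding q_def p_def by linarith
  qed
  have psj: "ps j \<ge> j" and qsj: "qs j \<ge> j" for j
  proof -
    have "Ms j \<ge> j" using Ms_mono by (simp add: seq_suble)
    then show "ps j \<ge> j" "qs j \<ge> j" using Nf(1)[of "Ms j"] qf(1)[of "Ms j"] unfolding ps_def qs_def by auto
  qed
  obtain Nc where Nc: "\<And>m n. m \<ge> Nc \<Longrightarrow> n \<ge> Nc \<Longrightarrow> dist (F m) (F n) < \<epsilon>/2"
    using cau[of B] \<epsilon> unfolding Cauchy_def F_def by (metis half_gt_zero)
  have "dist (F (qs Nc)) (F (ps Nc)) < \<epsilon>/2" by (rule Nc) (use psj qsj in auto)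
  then show False using gap[of Nc] by (simp add: dist_real_def)
qed


definition wsub :: "(nat \<Rightarrow> 'e::real_normed_vector) \<Rightarrow> bool" where
  "wsub z \<longleftrightarrow> (\<forall>f::'e\<Rightarrow>real. bounded_linear f \<longrightarrow> summable (\<lambda>j. \<bar>f (z j)\<bar>)) \<and>
     (\<forall>B. \<exists>u. \<forall>f::'e\<Rightarrow>real. bounded_linear f \<longrightarrow> f u = (\<Sum>j. indicator B j * f (z j)))"

lemma wsubD1:
  fixes z :: "nat \<Rightarrow> 'e::real_normed_vector" and f :: "'e \<Rightarrow> real"
  shows "wsub z \<Longrightarrow> bounded_linear f \<Longrightarrow> summable (\<lambda>j. \<bar>f (z j)\<bar>)"
  unfolding wsub_def by blast

lemma wsubD2:
  fixes z :: "nat \<Rightarrow> 'e::real_normed_vector"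
  shows "wsub z \<Longrightarrow> \<exists>u. \<forall>f::'e\<Rightarrow>real. bounded_linear f \<longrightarrow> f u = (\<Sum>j. indicator B j * f (z j))"
  unfolding wsub_def by blast

lemma wsub_subseq:
  fixes z :: "nat \<Rightarrow> 'e::real_normed_vector"
  assumes w: "wsub z" and s: "strict_mono s"
  shows "wsub (z \<circ> s)"
  unfolding wsub_def
proof (intro conjI allI impI)
  fix f :: "'e \<Rightarrow> real" assume f: "bounded_linear f"
  define h where "h n = indicator (range s) n * \<bar>f (z n)\<bar>" for n
  have "summable h"
    by (rule summable_comparison_test'[OF wsubD1[OF w f]]) (auto simp: h_def indicator_def)
  moreover have "h n = 0" if "n \<notin> range s" for n using that by (simp add: h_def)
  ultimately have "summable (\<lambda>n. h (s n))" using summable_mono_reindex[OF s] by blast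
  then show "summable (\<lambda>j. \<bar>f ((z \<circ> s) j)\<bar>)" by (simp add: h_def)
next
  fix B
  obtain u where u: "\<And>f::'e\<Rightarrow>real. bounded_linear f \<Longrightarrow> f u = (\<Sum>j. indicator (s ` B) j * f (z j))"
    using wsubD2[OF w, of "s ` B"] by blast
  have "f u = (\<Sum>j. indicator B j * f ((z \<circ> s) j))" if f: "bounded_linear f" for f :: "'e \<Rightarrow> real"
  proof -
    define g where "g n = indicator (s ` B) n * f (z n)" for n
    have "g n = 0" if "n \<notin> range s" for n using that by (auto simp: g_def indicator_def)
    then have "(\<Sum>n. g (s n)) = suminf g" using suminf_mono_reindex[OF s] by blast
    moreover have "g (s n) = indicator B n * f ((z \<circ> s) n)" for n
    proof -
      have "s n \<in> s ` B \<longleftrightarrow> n \<in> B" using strict_mono_eq[OF s] by auto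
      then show ?thesis by (simp add: g_def indicator_def)
    qed
    ultimately have "(\<Sum>n. indicator B n * f ((z \<circ> s) n)) = suminf g" by simp
    then show ?thesis using u[OF f] unfolding g_def by simp
  qed
  then show "\<exists>u. \<forall>f::'e\<Rightarrow>real. bounded_linear f \<longrightarrow> f u = (\<Sum>j. indicator B j * f ((z \<circ> s) j))" by blast
qed

lemma subspace_closure_rv:
  fixes S :: "'a::real_normed_vector set"
  assumes "subspace S"
  shows "subspace (closure S)"
  unfolding subspace_def
proof (intro conjI ballI allI)
  show "0 \<in> closure S" using assms subspace_0 closure_subset by blast
next
  fix x y assume x: "x \<in> closure S" and y: "y \<in> closure S"
  obtain a where a: "\<And>n. a n \<in> S" "a \<longlonglongrightarrow> x" using x unfolding closure_sequential by blast
  obtain b where b: "\<And>n. b n \<in> S" "b \<longlonglongrightarrow> y" using y unfolding closure_sequential by blast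
  have 1: "\<And>n. a n + b n \<in> S" using a b assms subspace_add by blast
  have 2: "(\<lambda>n. a n + b n) \<longlonglongrightarrow> x + y" using a b by (intro tendsto_add)
  show "x + y \<in> closure S" unfolding closure_sequential
    by (rule exI[of _ "\<lambda>n. a n + b n"]) (use 1 2 in auto)
next
  fix c :: real and x assume x: "x \<in> closure S"
  obtain a where a: "\<And>n. a n \<in> S" "a \<longlonglongrightarrow> x" using x unfolding closure_sequential by blast
  have 1: "\<And>n. c *\<^sub>R a n \<in> S" using a assms subspace_scale by blast
  have 2: "(\<lambda>n. c *\<^sub>R a n) \<longlonglongrightarrow> c *\<^sub>R x" using a by (intro tendsto_scaleR tendsto_const)
  show "c *\<^sub>R x \<in> closure S" unfolding closure_sequential
    by (rule exI[of _ "\<lambda>n. c *\<^sub>R a n"]) (use 1 2 in auto)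
qed

lemma wsub_mazur:
  fixes z :: "nat \<Rightarrow> 'e::real_normed_vector"
  assumes w: "wsub z" and u: "\<And>f::'e\<Rightarrow>real. bounded_linear f \<Longrightarrow> f u = (\<Sum>j. indicator B j * f (z j))"
  shows "u \<in> closure (span (range z))"
proof (rule ccontr)
  assume nu: "u \<notin> closure (span (range z))"
  have sub: "subspace (closure (span (range z)))" by (rule subspace_closure_rv[OF subspace_span])
  obtain f :: "'e \<Rightarrow> real" where f: "bounded_linear f" "\<And>v. v \<in> closure (span (range z)) \<Longrightarrow> f v = 0" "f u \<noteq> 0"
    using separation_functional[OF sub closed_closure nu] by blast
  have "f (z j) = 0" for j
  proof -
    have "z j \<in> span (range z)" by (rule span_base) simp
    then have "z j \<in> closure (span (range z))" using closure_subset by blast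
    then show ?thesis by (rule f(2))
  qed
  then have "f u = 0" using u[OF f(1)] by simp
  then show False using f(3) by simp
qed

lemma wsub_null:
  fixes z :: "nat \<Rightarrow> 'e::real_normed_vector"
  assumes zw: "wsub z"
  shows "z \<longlonglongrightarrow> 0"
proof (rule ccontr)
  assume nc: "\<not> z \<longlonglongrightarrow> 0"
  obtain \<epsilon> where \<epsilon>: "\<epsilon> > 0" and big: "\<And>N. \<exists>i\<ge>N. \<epsilon> \<le> norm (z i)"
    using nc unfolding LIMSEQ_iff by (auto simp: not_less)
  define J where "J = {j. \<epsilon> \<le> norm (z j)}"
  have infJ: "infinite J"
    unfolding infinite_nat_iff_unbounded_le J_def using big by blast
  define s where "s = enumerate J"
  have s: "strict_mono s" using strict_mono_enumerate[OF infJ] s_def by simp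
  define w where "w = z \<circ> s"
  have ww: "wsub w" using wsub_subseq[OF zw s] w_def by simp
  have wbig: "\<epsilon> \<le> norm (w i)" for i using enumerate_in_set[OF infJ, of i] unfolding w_def s_def J_def by simp
  have "\<forall>i. \<exists>f::'e\<Rightarrow>real. bounded_linear f \<and> f (w i) = norm (w i) \<and> (\<forall>x. \<bar>f x\<bar> \<le> norm x)"
    using norming_functional by blast
  then obtain fs :: "nat \<Rightarrow> 'e \<Rightarrow> real" where fs: "\<And>i. bounded_linear (fs i)" "\<And>i. fs i (w i) = norm (w i)"
    "\<And>i x. \<bar>fs i x\<bar> \<le> norm x"
    by metis
  interpret subseqs "\<lambda>k \<sigma>. convergent (\<lambda>i. fs (\<sigma> i) (w k))"
  proof
    fix k and \<sigma> :: "nat \<Rightarrow> nat" assume "strict_mono \<sigma>"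
    have "(\<lambda>i. fs (\<sigma> i) (w k)) i \<in> cball 0 (norm (w k))" for i using fs(3) by (simp add: dist_real_def)
    then obtain l r where "strict_mono r" "((\<lambda>i. fs (\<sigma> i) (w k)) \<circ> r) \<longlonglongrightarrow> l"
      using compact_cball[of "0::real" "norm (w k)"] unfolding compact_def by metis
    then show "\<exists>r'. strict_mono r' \<and> convergent (\<lambda>i. fs ((\<sigma> \<circ> r') i) (w k))"
      by (auto simp: convergent_def o_def)
  qed
  define d where "d = diagseq"
  have d: "strict_mono d" using subseq_diagseq d_def by simp
  have convw: "convergent (\<lambda>i. fs (d i) (w k))" for k
  proof -
    have "convergent (\<lambda>i. fs ((diagseq \<circ> (+) (Suc k)) i) (w k))"
    proof (rule diagseq_holds)
      fix r s :: "nat \<Rightarrow> nat" and n :: nat assume "strict_mono r" "convergent (\<lambda>i. fs (s i) (w n))"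
      then show "convergent (\<lambda>i. fs ((s \<circ> r) i) (w n))"
        unfolding convergent_def using LIMSEQ_subseq_LIMSEQ by (fastforce simp: o_def)
    qed
    then obtain l where "(\<lambda>i. fs (diagseq (Suc k + i)) (w k)) \<longlonglongrightarrow> l" by (auto simp: convergent_def o_def)
    then have "(\<lambda>i. fs (diagseq (i + Suc k)) (w k)) \<longlonglongrightarrow> l" by (simp add: add.commute)
    then have "(\<lambda>i. fs (diagseq i) (w k)) \<longlonglongrightarrow> l" by (rule LIMSEQ_offset)
    then show ?thesis unfolding d_def convergent_def by blast
  qed
  define g where "g i = fs (d i)" for i
  have g: "\<And>i. bounded_linear (g i)" "\<And>i x. \<bar>g i x\<bar> \<le> norm x" using fs unfolding g_def by auto
  have convspan: "convergent (\<lambda>i. g i x)" if "x \<in> span (range w)" for x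
  proof (rule span_induct[OF that])
    fix x assume "x \<in> range w" then show "convergent (\<lambda>i. g i x)" using convw g_def by auto
  next
    show "subspace {x. convergent (\<lambda>i. g i x)}" unfolding subspace_def
    proof (intro conjI ballI allI; clarsimp?)
      show "convergent (\<lambda>i. g i 0)" using linear_0[OF bounded_linear.linear[OF g(1)]] by (simp add: convergent_const)
    next
      fix x y assume "convergent (\<lambda>i. g i x)" "convergent (\<lambda>i. g i y)"
      then have "convergent (\<lambda>i. g i x + g i y)" by (rule convergent_add)
      then show "convergent (\<lambda>i. g i (x + y))" using linear_add[OF bounded_linear.linear[OF g(1)]] by simp
    next
      fix c :: real and x assume "convergent (\<lambda>i. g i x)"
      then have "convergent (\<lambda>i. c * g i x)" by (rule convergent_mult[OF convergent_const])
      then show "convergent (\<lambda>i. g i (c *\<^sub>R x))" using linear_scale[OF bounded_linear.linear[OF g(1)]] by simp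
    qed
  qed
  have convcl: "convergent (\<lambda>i. g i x)" if x: "x \<in> closure (span (range w))" for x
  proof -
    have "Cauchy (\<lambda>i. g i x)"
    proof (rule metric_CauchyI)
      fix e :: real assume e: "e > 0"
      obtain y where y: "y \<in> span (range w)" "dist y x < e/3"
        using x e unfolding closure_approachable by (metis divide_pos_pos zero_less_numeral)
      have "Cauchy (\<lambda>i. g i y)" using convspan[OF y(1)] convergent_Cauchy by blast
      then obtain M where M: "\<And>m n. m \<ge> M \<Longrightarrow> n \<ge> M \<Longrightarrow> dist (g m y) (g n y) < e/3"
        using e unfolding Cauchy_def by (metis divide_pos_pos zero_less_numeral)
      have ap: "\<bar>g i x - g i y\<bar> < e/3" for i
      proof -
        have "g i x - g i y = g i (x - y)" using linear_diff[OF bounded_linear.linear[OF g(1)]] by simp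
        then show ?thesis using g(2)[of i "x - y"] y(2) by (simp add: dist_norm norm_minus_commute)
      qed
      show "\<exists>M. \<forall>m\<ge>M. \<forall>n\<ge>M. dist (g m x) (g n x) < e"
      proof (intro exI allI impI)
        fix m n assume "m \<ge> M" "n \<ge> M"
        then have "\<bar>g m y - g n y\<bar> < e/3" using M by (simp add: dist_real_def)
        then show "dist (g m x) (g n x) < e" using ap[of m] ap[of n] unfolding dist_real_def by linarith
      qed
    qed
    then show ?thesis using Cauchy_convergent_iff by blast
  qed
  define w' where "w' = w \<circ> d"
  have w'w: "wsub w'" using wsub_subseq[OF ww d] w'_def by simp
  define \<rho> where "\<rho> i k = g i (w' k)" for i k
  have rows: "summable (\<lambda>k. \<bar>\<rho> i k\<bar>)" for i using wsubD1[OF w'w g(1)] \<rho>_def by simp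
  have cau: "Cauchy (\<lambda>i. \<Sum>k. indicator B k * \<rho> i k)" for B
  proof -
    obtain u where u: "\<And>f::_\<Rightarrow>real. bounded_linear f \<Longrightarrow> f u = (\<Sum>j. indicator B j * f (w' j))"
      using wsubD2[OF w'w, of B] by blast
    have "u \<in> closure (span (range w'))" by (rule wsub_mazur[OF w'w u])
    moreover have "closure (span (range w')) \<subseteq> closure (span (range w))"
      by (intro closure_mono span_mono) (auto simp: w'_def)
    ultimately have "convergent (\<lambda>i. g i u)" using convcl by blast
    then show ?thesis using u[OF g(1)] \<rho>_def convergent_Cauchy by simp
  qed
  have "(\<lambda>i. \<rho> i i) \<longlonglongrightarrow> 0" by (rule phillips_diag[OF rows cau])
  moreover have "\<epsilon> \<le> \<rho> i i" for i using fs(2)[of "d i"] wbig[of "d i"] unfolding \<rho>_def g_def w'_def by simp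
  ultimately show False using \<epsilon>
    by (metis LIMSEQ_le_const order.refl not_le)
qed


lemma block_sums:
  fixes a :: "nat \<Rightarrow> real"
  assumes nb: "strict_mono nb" "nb 0 = 0" and a: "summable a"
  shows "(\<lambda>k. \<Sum>j\<in>{nb k..<nb (Suc k)}. a j) sums (suminf a)"
proof -
  have ps: "(\<Sum>k<K. \<Sum>j\<in>{nb k..<nb (Suc k)}. a j) = (\<Sum>j<nb K. a j)" for K
  proof (induction K)
    case 0 then show ?case using nb(2) by simp
  next
    case (Suc K)
    have le: "nb K \<le> nb (Suc K)" using nb(1) by (simp add: strict_mono_less_eq)
    have "(\<Sum>k<Suc K. \<Sum>j\<in>{nb k..<nb (Suc k)}. a j) = (\<Sum>j<nb K. a j) + (\<Sum>j\<in>{nb K..<nb (Suc K)}. a j)"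
      using Suc by simp
    also have "\<dots> = (\<Sum>j<nb (Suc K). a j)"
      using sum.atLeastLessThan_concat[OF _ le, of 0 a] by (simp add: atLeast0LessThan)
    finally show ?case .
  qed
  have "(\<lambda>K. \<Sum>j<nb K. a j) \<longlonglongrightarrow> suminf a"
    using LIMSEQ_subseq_LIMSEQ[OF summable_LIMSEQ[OF a] nb(1)] by (simp add: o_def)
  then show ?thesis unfolding sums_def ps .
qed

lemma abs_sum_split_bl:
  fixes f :: "'e::real_normed_vector \<Rightarrow> real" and v :: "nat \<Rightarrow> 'e"
  assumes f: "bounded_linear f" and G: "finite G"
  shows "(\<Sum>j\<in>G. \<bar>f (v j)\<bar>) = f (\<Sum>j\<in>G \<inter> {j. f (v j) \<ge> 0}. v j) - f (\<Sum>j\<in>G - {j. f (v j) \<ge> 0}. v j)"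
proof -
  have lin: "linear f" using f bounded_linear.linear by blast
  have "(\<Sum>j\<in>G. \<bar>f (v j)\<bar>) = (\<Sum>j\<in>G \<inter> {j. f (v j) \<ge> 0}. \<bar>f (v j)\<bar>) + (\<Sum>j\<in>G - {j. f (v j) \<ge> 0}. \<bar>f (v j)\<bar>)"
    using sum.Int_Diff[OF G] by blast
  also have "(\<Sum>j\<in>G \<inter> {j. f (v j) \<ge> 0}. \<bar>f (v j)\<bar>) = (\<Sum>j\<in>G \<inter> {j. f (v j) \<ge> 0}. f (v j))"
    by (rule sum.cong) auto
  also have "(\<Sum>j\<in>G - {j. f (v j) \<ge> 0}. \<bar>f (v j)\<bar>) = - (\<Sum>j\<in>G - {j. f (v j) \<ge> 0}. f (v j))"
    by (simp add: sum_negf[symmetric])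
  finally show ?thesis using linear_sum[OF lin, of v "G \<inter> {j. f (v j) \<ge> 0}"]
    linear_sum[OF lin, of v "G - {j. f (v j) \<ge> 0}"] by simp
qed

lemma UC_wsub:
  fixes v :: "nat \<Rightarrow> 'e::banach"
  assumes uc: "\<And>\<epsilon>. \<epsilon> > 0 \<Longrightarrow> \<exists>n. \<forall>G. finite G \<longrightarrow> G \<subseteq> {n..} \<longrightarrow> norm (\<Sum>j\<in>G. v j) < \<epsilon>"
  shows "wsub v"
  unfolding wsub_def
proof (intro conjI allI impI)
  fix f :: "'e \<Rightarrow> real" assume f: "bounded_linear f"
  obtain K where K: "K > 0" "\<And>x. norm (f x) \<le> norm x * K" using bounded_linear.pos_bounded[OF f] by blast
  show "summable (\<lambda>j. \<bar>f (v j)\<bar>)"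
    unfolding summable_Cauchy
  proof (intro allI impI)
    fix e :: real assume e: "e > 0"
    obtain n where n: "\<And>G. finite G \<Longrightarrow> G \<subseteq> {n..} \<Longrightarrow> norm (\<Sum>j\<in>G. v j) < e/(2*K)"
      using uc[of "e/(2*K)"] e K by auto
    show "\<exists>N. \<forall>m\<ge>N. \<forall>n'. norm (\<Sum>j\<in>{m..<n'}. \<bar>f (v j)\<bar>) < e"
    proof (intro exI allI impI)
      fix m n' assume m: "n \<le> m"
      define G where "G = {m..<n'}"
      have G: "finite G" "G \<subseteq> {n..}" using m G_def by auto
      have b1: "\<bar>f (\<Sum>j\<in>G \<inter> {j. f (v j) \<ge> 0}. v j)\<bar> < e/2"
      proof -
        have "\<bar>f (\<Sum>j\<in>G \<inter> {j. f (v j) \<ge> 0}. v j)\<bar> \<le> norm (\<Sum>j\<in>G \<inter> {j. f (v j) \<ge> 0}. v j) * K"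
          using K(2) by simp
        also have "\<dots> < e/(2*K) * K"
          using n[of "G \<inter> {j. f (v j) \<ge> 0}"] G K(1) by (intro mult_strict_right_mono) auto
        finally show ?thesis using K(1) by simp
      qed
      have b2: "\<bar>f (\<Sum>j\<in>G - {j. f (v j) \<ge> 0}. v j)\<bar> < e/2"
      proof -
        have "\<bar>f (\<Sum>j\<in>G - {j. f (v j) \<ge> 0}. v j)\<bar> \<le> norm (\<Sum>j\<in>G - {j. f (v j) \<ge> 0}. v j) * K"
          using K(2) by simp
        also have "\<dots> < e/(2*K) * K"
          using n[of "G - {j. f (v j) \<ge> 0}"] G K(1) by (intro mult_strict_right_mono) auto
        finally show ?thesis using K(1) by simp
      qed
      have "norm (\<Sum>j\<in>G. \<bar>f (v j)\<bar>) = (\<Sum>j\<in>G. \<bar>f (v j)\<bar>)" by (simp add: sum_nonneg)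
      also have "\<dots> = f (\<Sum>j\<in>G \<inter> {j. f (v j) \<ge> 0}. v j) - f (\<Sum>j\<in>G - {j. f (v j) \<ge> 0}. v j)"
        by (rule abs_sum_split_bl[OF f G(1)])
      also have "\<dots> < e" using b1 b2 by linarith
      finally show "norm (\<Sum>j\<in>{m..<n'}. \<bar>f (v j)\<bar>) < e" unfolding G_def .
    qed
  qed
next
  fix B
  have sm: "summable (\<lambda>j. indicator B j *\<^sub>R v j)"
    unfolding summable_Cauchy
  proof (intro allI impI)
    fix e :: real assume e: "e > 0"
    obtain n where n: "\<And>G. finite G \<Longrightarrow> G \<subseteq> {n..} \<Longrightarrow> norm (\<Sum>j\<in>G. v j) < e"
      using uc[OF e] by auto
    show "\<exists>N. \<forall>m\<ge>N. \<forall>n'. norm (\<Sum>j\<in>{m..<n'}. indicator B j *\<^sub>R v j) < e"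
    proof (intro exI allI impI)
      fix m n' assume m: "n \<le> m"
      have "(\<Sum>j\<in>{m..<n'}. indicator B j *\<^sub>R v j) = (\<Sum>j\<in>{m..<n'} \<inter> B. v j)"
        by (simp add: indicator_scaleR_eq_if sum.inter_restrict)
      moreover have "{m..<n'} \<inter> B \<subseteq> {n..}" using m by auto
      ultimately show "norm (\<Sum>j\<in>{m..<n'}. indicator B j *\<^sub>R v j) < e"
        using n[of "{m..<n'} \<inter> B"] by simp
    qed
  qed
  have "f (\<Sum>j. indicator B j *\<^sub>R v j) = (\<Sum>j. indicator B j * f (v j))" if f: "bounded_linear f" for f :: "'e \<Rightarrow> real"
  proof -
    have "f (\<Sum>j. indicator B j *\<^sub>R v j) = (\<Sum>j. f (indicator B j *\<^sub>R v j))"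
      by (rule bounded_linear.suminf[OF f sm])
    also have "\<dots> = (\<Sum>j. indicator B j * f (v j))"
      using linear_scale[OF bounded_linear.linear[OF f]] by simp
    finally show ?thesis .
  qed
  then show "\<exists>u. \<forall>f::'e\<Rightarrow>real. bounded_linear f \<longrightarrow> f u = (\<Sum>j. indicator B j * f (v j))" by blast
qed

lemma wsub_UC:
  fixes z :: "nat \<Rightarrow> 'e::real_normed_vector"
  assumes zw: "wsub z" and e: "\<epsilon> > 0"
  shows "\<exists>n. \<forall>G. finite G \<longrightarrow> G \<subseteq> {n..} \<longrightarrow> norm (\<Sum>j\<in>G. z j) < \<epsilon>"
proof (rule ccontr)
  assume "\<not> ?thesis"
  then have ex: "\<exists>G. finite G \<and> G \<subseteq> {n..} \<and> \<epsilon> \<le> norm (\<Sum>j\<in>G. z j)" for n by (auto simp: not_less)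
  define Gf where "Gf n = (SOME G. finite G \<and> G \<subseteq> {n..} \<and> \<epsilon> \<le> norm (\<Sum>j\<in>G. z j))" for n
  have Gf: "finite (Gf n)" "Gf n \<subseteq> {n..}" "\<epsilon> \<le> norm (\<Sum>j\<in>Gf n. z j)" for n
    using someI_ex[OF ex[of n]] unfolding Gf_def by blast+
  have Gne: "Gf n \<noteq> {}" for n using Gf(3)[of n] e by auto
  define step where "step n = Suc (Max (Gf n))" for n
  define nb where "nb k = (step ^^ k) 0" for k
  have nbS: "nb (Suc k) = step (nb k)" for k unfolding nb_def by simp
  have Gsub: "Gf (nb k) \<subseteq> {nb k..<nb (Suc k)}" for k
  proof
    fix j assume "j \<in> Gf (nb k)"
    then have "nb k \<le> j" "j \<le> Max (Gf (nb k))" using Gf(2) Max_ge[OF Gf(1)] by auto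
    then show "j \<in> {nb k..<nb (Suc k)}" unfolding nbS step_def by auto
  qed
  have nbmono: "strict_mono nb"
    unfolding strict_mono_Suc_iff
  proof
    fix k
    obtain j where "j \<in> Gf (nb k)" using Gne by blast
    then show "nb k < nb (Suc k)" using Gsub[of k] by auto
  qed
  have nb0: "nb 0 = 0" unfolding nb_def by simp
  define w where "w k = (\<Sum>j\<in>Gf (nb k). z j)" for k
  have wbig: "\<epsilon> \<le> norm (w k)" for k unfolding w_def using Gf(3) .
  have "wsub w"
    unfolding wsub_def
  proof (intro conjI allI impI)
    fix f :: "'e \<Rightarrow> real" assume f: "bounded_linear f"
    have lin: "linear f" using f bounded_linear.linear by blast
    have bs: "(\<lambda>k. \<Sum>j\<in>{nb k..<nb (Suc k)}. \<bar>f (z j)\<bar>) sums (\<Sum>j. \<bar>f (z j)\<bar>)"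
      by (rule block_sums[OF nbmono nb0 wsubD1[OF zw f]])
    have le: "norm (\<bar>f (w k)\<bar>) \<le> (\<Sum>j\<in>{nb k..<nb (Suc k)}. \<bar>f (z j)\<bar>)" for k
    proof -
      have "\<bar>f (w k)\<bar> = \<bar>\<Sum>j\<in>Gf (nb k). f (z j)\<bar>" unfolding w_def using linear_sum[OF lin, of z "Gf (nb k)"] by simp
      also have "\<dots> \<le> (\<Sum>j\<in>Gf (nb k). \<bar>f (z j)\<bar>)" by (rule sum_abs)
      also have "\<dots> \<le> (\<Sum>j\<in>{nb k..<nb (Suc k)}. \<bar>f (z j)\<bar>)"
        by (rule sum_mono2[OF _ Gsub]) auto
      finally show ?thesis by simp
    qed
    show "summable (\<lambda>k. \<bar>f (w k)\<bar>)"
      by (rule summable_comparison_test'[OF sums_summable[OF bs] le])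
  next
    fix B
    define U where "U = (\<Union>k\<in>B. Gf (nb k))"
    obtain u where u: "\<And>f::'e\<Rightarrow>real. bounded_linear f \<Longrightarrow> f u = (\<Sum>j. indicator U j * f (z j))"
      using wsubD2[OF zw, of U] by blast
    have "f u = (\<Sum>k. indicator B k * f (w k))" if f: "bounded_linear f" for f :: "'e \<Rightarrow> real"
    proof -
      have lin: "linear f" using f bounded_linear.linear by blast
      have sa: "summable (\<lambda>j. indicator U j * f (z j))"
        by (rule summable_rabs_cancel, rule summable_comparison_test'[OF wsubD1[OF zw f]])
          (auto simp: indicator_def)
      have bs: "(\<lambda>k. \<Sum>j\<in>{nb k..<nb (Suc k)}. indicator U j * f (z j)) sums (\<Sum>j. indicator U j * f (z j))"
        by (rule block_sums[OF nbmono nb0 sa])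
      have blk: "(\<Sum>j\<in>{nb k..<nb (Suc k)}. indicator U j * f (z j)) = indicator B k * f (w k)" for k
      proof -
        have UI: "{nb k..<nb (Suc k)} \<inter> U = (if k \<in> B then Gf (nb k) else {})"
        proof (intro equalityI subsetI)
          fix j assume j: "j \<in> {nb k..<nb (Suc k)} \<inter> U"
          then obtain k' where k': "k' \<in> B" "j \<in> Gf (nb k')" unfolding U_def by blast
          have "k' = k"
          proof (rule ccontr)
            assume "k' \<noteq> k"
            then consider "k' < k" | "k < k'" by linarith
            then show False
            proof cases
              case 1
              then have "nb (Suc k') \<le> nb k" using nbmono by (simp add: strict_mono_less_eq)
              then show False using Gsub[of k'] k' j by auto
            next
              case 2
              then have "nb (Suc k) \<le> nb k'" using nbmono by (simp add: strict_mono_less_eq)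
              then show False using Gsub[of k'] k' j by auto
            qed
          qed
          then show "j \<in> (if k \<in> B then Gf (nb k) else {})" using k' by simp
        next
          fix j assume "j \<in> (if k \<in> B then Gf (nb k) else {})"
          then show "j \<in> {nb k..<nb (Suc k)} \<inter> U" using Gsub[of k] unfolding U_def by (auto split: if_splits)
        qed
        have "(\<Sum>j\<in>{nb k..<nb (Suc k)}. indicator U j * f (z j)) = (\<Sum>j\<in>{nb k..<nb (Suc k)}. if j \<in> U then f (z j) else 0)"
          by (rule sum.cong) (auto simp: indicator_def)
        also have "\<dots> = (\<Sum>j\<in>{nb k..<nb (Suc k)} \<inter> U. f (z j))" by (simp add: sum.inter_restrict)
        also have "\<dots> = indicator B k * f (w k)"
          unfolding UI w_def using linear_sum[OF lin, of z "Gf (nb k)"] by (simp add: indicator_def)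
        finally show ?thesis .
      qed
      show ?thesis using u[OF f] sums_unique[OF bs] blk by simp
    qed
    then show "\<exists>u. \<forall>f::'e\<Rightarrow>real. bounded_linear f \<longrightarrow> f u = (\<Sum>k. indicator B k * f (w k))" by blast
  qed
  then have "w \<longlonglongrightarrow> 0" by (rule wsub_null)
  from tendstoD[OF this e] have "eventually (\<lambda>k. dist (w k) 0 < \<epsilon>) sequentially" .
  then obtain N where "\<forall>k\<ge>N. dist (w k) 0 < \<epsilon>" unfolding eventually_sequentially by blast
  then have "norm (w N) < \<epsilon>" by simp
  then show False using wbig[of N] by simp
qed


lemma bl_scale:
  fixes f :: "'e::real_normed_vector \<Rightarrow> real"
  assumes "bounded_linear f" shows "f (c *\<^sub>R v) = c * f v"
  using linear_scale[OF bounded_linear.linear[OF assms]] by simp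

lemma ell1_mT_iff:
  fixes T :: "(nat \<Rightarrow> real) \<Rightarrow> 'e::banach"
  shows "x \<in> ell1_mT T \<longleftrightarrow> wsub (\<lambda>j. x j *\<^sub>R T (unitseq j))"
proof -
  have int_iff: "integrable (var_meas T f) x \<longleftrightarrow> summable (\<lambda>j. \<bar>f (x j *\<^sub>R T (unitseq j))\<bar>)"
    if f: "bounded_linear f" for f :: "'e \<Rightarrow> real"
  proof -
    have "integrable (var_meas T f) x \<longleftrightarrow> integrable (count_space UNIV) (\<lambda>j. \<bar>f (T (unitseq j))\<bar> *\<^sub>R x j)"
      unfolding var_meas_def by (rule integrable_density) auto
    also have "\<dots> \<longleftrightarrow> summable (\<lambda>j. norm (\<bar>f (T (unitseq j))\<bar> *\<^sub>R x j))"
      by (rule integrable_count_space_nat_iff)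
    also have "(\<lambda>j. norm (\<bar>f (T (unitseq j))\<bar> *\<^sub>R x j)) = (\<lambda>j. \<bar>f (x j *\<^sub>R T (unitseq j))\<bar>)"
      using bl_scale[OF f] by (auto simp: abs_mult)
    finally show ?thesis .
  qed
  have sc: "scal_int T f A x = (\<Sum>j. indicator A j * f (x j *\<^sub>R T (unitseq j)))"
    if f: "bounded_linear f" and s: "summable (\<lambda>j. \<bar>f (x j *\<^sub>R T (unitseq j))\<bar>)" for f :: "'e \<Rightarrow> real" and A
  proof -
    have eq: "(\<lambda>j. indicator A j * (x j * f (T (unitseq j)))) = (\<lambda>j. indicator A j * f (x j *\<^sub>R T (unitseq j)))"
      using bl_scale[OF f] by simp
    have "summable (\<lambda>j. norm (indicator A j * f (x j *\<^sub>R T (unitseq j))))"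
      by (rule summable_comparison_test'[OF s]) (auto simp: indicator_def)
    then have "integrable (count_space UNIV) (\<lambda>j. indicator A j * f (x j *\<^sub>R T (unitseq j)))"
      using integrable_count_space_nat_iff by blast
    then show ?thesis unfolding scal_int_def eq by (rule integral_count_space_nat)
  qed
  show ?thesis
  proof
    assume x: "x \<in> ell1_mT T"
    have s: "summable (\<lambda>j. \<bar>f (x j *\<^sub>R T (unitseq j))\<bar>)" if "bounded_linear f" for f :: "'e \<Rightarrow> real"
    proof -
      have "integrable (var_meas T f) x" using x that unfolding ell1_mT_def by blast
      then show ?thesis using int_iff[OF that] by simp
    qed
    show "wsub (\<lambda>j. x j *\<^sub>R T (unitseq j))"
      unfolding wsub_def
    proof (intro conjI allI impI)
      fix f :: "'e \<Rightarrow> real" assume "bounded_linear f" then show "summable (\<lambda>j. \<bar>f (x j *\<^sub>R T (unitseq j))\<bar>)" by (rule s)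
    next
      fix B
      have "\<exists>v. \<forall>f::'e\<Rightarrow>real. bounded_linear f \<longrightarrow> f v = scal_int T f B x"
        using x unfolding ell1_mT_def by simp
      then obtain v where v: "\<forall>f::'e\<Rightarrow>real. bounded_linear f \<longrightarrow> f v = scal_int T f B x" by blast
      have "\<forall>f::'e\<Rightarrow>real. bounded_linear f \<longrightarrow> f v = (\<Sum>j. indicator B j * f (x j *\<^sub>R T (unitseq j)))"
      proof (intro allI impI)
        fix f :: "'e \<Rightarrow> real" assume f: "bounded_linear f"
        have "f v = scal_int T f B x" using v f by blast
        then show "f v = (\<Sum>j. indicator B j * f (x j *\<^sub>R T (unitseq j)))" using sc[OF f s[OF f]] by simp
      qed
      then show "\<exists>u. \<forall>f::'e\<Rightarrow>real. bounded_linear f \<longrightarrow> f u = (\<Sum>j. indicator B j * f (x j *\<^sub>R T (unitseq j)))"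
        by blast
    qed
  next
    assume w: "wsub (\<lambda>j. x j *\<^sub>R T (unitseq j))"
    have s: "summable (\<lambda>j. \<bar>f (x j *\<^sub>R T (unitseq j))\<bar>)" if "bounded_linear f" for f :: "'e \<Rightarrow> real"
      using wsubD1[OF w that] by simp
    show "x \<in> ell1_mT T"
      unfolding ell1_mT_def
    proof (intro CollectI conjI allI impI)
      fix f :: "'e \<Rightarrow> real" assume "bounded_linear f" then show "integrable (var_meas T f) x"
        using int_iff s by blast
    next
      fix A
      obtain u where u: "\<And>f::'e\<Rightarrow>real. bounded_linear f \<Longrightarrow> f u = (\<Sum>j. indicator A j * f (x j *\<^sub>R T (unitseq j)))"
        using wsubD2[OF w, of A] by blast
      have "\<forall>f::'e\<Rightarrow>real. bounded_linear f \<longrightarrow> f u = scal_int T f A x"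
      proof (intro allI impI)
        fix f :: "'e \<Rightarrow> real" assume f: "bounded_linear f"
        show "f u = scal_int T f A x" using u[OF f] sc[OF f s[OF f]] by simp
      qed
      then show "\<exists>v::'e. \<forall>f::'e\<Rightarrow>real. bounded_linear f \<longrightarrow> f v = scal_int T f A x" by blast
    qed
  qed
qed

lemma wsub_abs:
  fixes t :: "nat \<Rightarrow> 'e::real_normed_vector" and x :: "nat \<Rightarrow> real"
  assumes w: "wsub (\<lambda>j. x j *\<^sub>R t j)"
  shows "wsub (\<lambda>j. \<bar>x j\<bar> *\<^sub>R t j)"
  unfolding wsub_def
proof (intro conjI allI impI)
  fix f :: "'e \<Rightarrow> real" assume f: "bounded_linear f"
  have "(\<lambda>j. \<bar>f (\<bar>x j\<bar> *\<^sub>R t j)\<bar>) = (\<lambda>j. \<bar>f (x j *\<^sub>R t j)\<bar>)" using bl_scale[OF f] by (simp add: abs_mult)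
  then show "summable (\<lambda>j. \<bar>f (\<bar>x j\<bar> *\<^sub>R t j)\<bar>)" using wsubD1[OF w f] by simp
next
  fix B
  define P where "P = {j. x j \<ge> 0}"
  obtain u1 where u1: "\<And>f::'e\<Rightarrow>real. bounded_linear f \<Longrightarrow> f u1 = (\<Sum>j. indicator (B \<inter> P) j * f (x j *\<^sub>R t j))"
    using wsubD2[OF w, of "B \<inter> P"] by blast
  obtain u2 where u2: "\<And>f::'e\<Rightarrow>real. bounded_linear f \<Longrightarrow> f u2 = (\<Sum>j. indicator (B - P) j * f (x j *\<^sub>R t j))"
    using wsubD2[OF w, of "B - P"] by blast
  have "f (u1 - u2) = (\<Sum>j. indicator B j * f (\<bar>x j\<bar> *\<^sub>R t j))" if f: "bounded_linear f" for f :: "'e \<Rightarrow> real"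
  proof -
    have s1: "summable (\<lambda>j. indicator S j * f (x j *\<^sub>R t j))" for S
      by (rule summable_rabs_cancel, rule summable_comparison_test'[OF wsubD1[OF w f]]) (auto simp: indicator_def)
    have "f (u1 - u2) = f u1 - f u2" using linear_diff[OF bounded_linear.linear[OF f]] by simp
    also have "\<dots> = (\<Sum>j. indicator (B \<inter> P) j * f (x j *\<^sub>R t j) - indicator (B - P) j * f (x j *\<^sub>R t j))"
      using u1[OF f] u2[OF f] suminf_diff[OF s1 s1] by simp
    also have "\<dots> = (\<Sum>j. indicator B j * f (\<bar>x j\<bar> *\<^sub>R t j))"
      by (rule suminf_cong) (auto simp: indicator_def P_def bl_scale[OF f])
    finally show ?thesis .
  qed
  then show "\<exists>u. \<forall>f::'e\<Rightarrow>real. bounded_linear f \<longrightarrow> f u = (\<Sum>j. indicator B j * f (\<bar>x j\<bar> *\<^sub>R t j))" by blast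
qed

lemma sup_le_bound:
  fixes T :: "(nat \<Rightarrow> real) \<Rightarrow> 'e::real_normed_vector"
  assumes "finite F" "\<And>N. N \<subseteq> F \<Longrightarrow> norm (\<Sum>j\<in>N. x j *\<^sub>R T (unitseq j)) \<le> b"
  shows "(SUP N\<in>Pow F. norm (\<Sum>j\<in>N. x j *\<^sub>R T (unitseq j))) \<le> b"
  using assms by (intro cSUP_least) auto

lemma sup_ge:
  fixes T :: "(nat \<Rightarrow> real) \<Rightarrow> 'e::real_normed_vector"
  assumes "finite F" "N \<subseteq> F"
  shows "norm (\<Sum>j\<in>N. x j *\<^sub>R T (unitseq j)) \<le> (SUP N\<in>Pow F. norm (\<Sum>j\<in>N. x j *\<^sub>R T (unitseq j)))"
  using assms by (intro cSUP_upper) (auto intro!: bdd_above_finite)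

lemma if_dir:
  fixes T :: "(nat \<Rightarrow> real) \<Rightarrow> 'e::banach"
  assumes dom: "r_power_dominated T r" and r: "r > 0" and x: "x \<in> ell1_mT T"
  shows "x \<in> ellr_mT T r"
proof -
  obtain C where C: "C > 0" and dm: "\<And>F y. finite F \<Longrightarrow> (\<forall>j\<in>F. y j \<ge> (0::real)) \<Longrightarrow>
      norm (\<Sum>j\<in>F. (y j powr r) *\<^sub>R T (unitseq j)) powr (1 / r)
        \<le> C * (SUP N\<in>Pow F. norm (\<Sum>j\<in>N. y j *\<^sub>R T (unitseq j)))"
    using dom unfolding r_power_dominated_def by blast
  have zw: "wsub (\<lambda>j. \<bar>x j\<bar> *\<^sub>R T (unitseq j))"
    by (rule wsub_abs) (use x ell1_mT_iff in blast)
  have uc: "\<exists>n. \<forall>G. finite G \<longrightarrow> G \<subseteq> {n..} \<longrightarrow> norm (\<Sum>j\<in>G. (\<bar>x j\<bar> powr r) *\<^sub>R T (unitseq j)) < \<delta>"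
    if \<delta>: "\<delta> > 0" for \<delta>
  proof -
    define \<epsilon> where "\<epsilon> = (\<delta>/2) powr (1/r) / C"
    have \<epsilon>: "\<epsilon> > 0" using \<delta> C by (simp add: \<epsilon>_def)
    obtain n where n: "\<And>G. finite G \<Longrightarrow> G \<subseteq> {n..} \<Longrightarrow> norm (\<Sum>j\<in>G. \<bar>x j\<bar> *\<^sub>R T (unitseq j)) < \<epsilon>"
      using wsub_UC[OF zw \<epsilon>] by blast
    show ?thesis
    proof (intro exI allI impI)
      fix G assume G: "finite G" "G \<subseteq> {n..}"
      define a where "a = norm (\<Sum>j\<in>G. (\<bar>x j\<bar> powr r) *\<^sub>R T (unitseq j))"
      have "a powr (1/r) \<le> C * (SUP N\<in>Pow G. norm (\<Sum>j\<in>N. \<bar>x j\<bar> *\<^sub>R T (unitseq j)))"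
        unfolding a_def using dm[of G "\<lambda>j. \<bar>x j\<bar>"] G by simp
      also have "\<dots> \<le> C * \<epsilon>"
      proof (rule mult_left_mono[OF _ less_imp_le[OF C]])
        show "(SUP N\<in>Pow G. norm (\<Sum>j\<in>N. \<bar>x j\<bar> *\<^sub>R T (unitseq j))) \<le> \<epsilon>"
        proof (rule sup_le_bound[OF G(1)])
          fix N assume "N \<subseteq> G"
          then have "finite N" "N \<subseteq> {n..}" using G finite_subset by auto
          from n[OF this] show "norm (\<Sum>j\<in>N. \<bar>x j\<bar> *\<^sub>R T (unitseq j)) \<le> \<epsilon>" by (rule less_imp_le)
        qed
      qed
      also have "\<dots> = (\<delta>/2) powr (1/r)" using C by (simp add: \<epsilon>_def)
      finally have le: "a powr (1/r) \<le> (\<delta>/2) powr (1/r)" .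
      have "a \<le> \<delta>/2"
      proof (rule ccontr)
        assume "\<not> a \<le> \<delta>/2"
        then have "(\<delta>/2) powr (1/r) < a powr (1/r)" using \<delta> r by (intro powr_less_mono2) auto
        then show False using le by simp
      qed
      then show "norm (\<Sum>j\<in>G. (\<bar>x j\<bar> powr r) *\<^sub>R T (unitseq j)) < \<delta>" using \<delta> a_def by simp
    qed
  qed
  have "wsub (\<lambda>j. (\<bar>x j\<bar> powr r) *\<^sub>R T (unitseq j))"
    by (rule UC_wsub) (use uc in blast)
  then have "(\<lambda>j. \<bar>x j\<bar> powr r) \<in> ell1_mT T" using ell1_mT_iff by blast
  then show ?thesis unfolding ellr_mT_def by simp
qed


lemma blocks_exist:
  fixes T :: "(nat \<Rightarrow> real) \<Rightarrow> 'e::real_normed_vector"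
  assumes nd: "\<not> r_power_dominated T r" and r: "r > 0" and tnz: "\<And>j. T (unitseq j) \<noteq> 0" and \<delta>: "\<delta> > 0"
  shows "\<exists>F y. finite F \<and> F \<subseteq> {n..} \<and> (\<forall>j. 0 \<le> y j) \<and>
     (\<forall>N\<subseteq>F. norm (\<Sum>j\<in>N. y j *\<^sub>R T (unitseq j)) \<le> \<delta>) \<and>
     1 \<le> norm (\<Sum>j\<in>F. (y j powr r) *\<^sub>R T (unitseq j))"
proof -
  define t where "t j = T (unitseq j)" for j
  have tpos: "norm (t j) > 0" for j using tnz t_def by simp
  define K where "K = (\<Sum>j<n. norm (t j) powr (1 - r))"
  have K0: "K \<ge> 0" unfolding K_def by (simp add: sum_nonneg)
  define D where "D = K + \<delta> powr (- r) + 1"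
  have D: "D > 0" using K0 D_def by (simp add: add_nonneg_pos)
  define C where "C = D powr (1/r)"
  have C: "C > 0" using D C_def by simp
  have Cr: "C powr r = D" unfolding C_def using D r by (simp add: powr_powr)
  obtain F x where F: "finite F" and xF: "\<forall>j\<in>F. x j \<ge> 0"
    and big: "\<not> norm (\<Sum>j\<in>F. (x j powr r) *\<^sub>R t j) powr (1 / r)
        \<le> C * (SUP N\<in>Pow F. norm (\<Sum>j\<in>N. x j *\<^sub>R t j))"
    using nd C unfolding r_power_dominated_def t_def by blast
  define S where "S = (SUP N\<in>Pow F. norm (\<Sum>j\<in>N. x j *\<^sub>R t j))"
  have Sge: "norm (\<Sum>j\<in>N. x j *\<^sub>R t j) \<le> S" if "N \<subseteq> F" for N
    unfolding S_def t_def by (rule sup_ge[OF F that])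
  have S0: "S \<ge> 0" using Sge[of "{}"] by simp
  define a where "a = norm (\<Sum>j\<in>F. (x j powr r) *\<^sub>R t j)"
  have bigS: "a powr (1/r) > C * S" using big unfolding a_def S_def by simp
  have Spos: "S > 0"
  proof (rule ccontr)
    assume "\<not> S > 0"
    then have S00: "S = 0" using S0 by simp
    have "x j = 0" if "j \<in> F" for j
    proof -
      have "norm (x j *\<^sub>R t j) \<le> 0" using Sge[of "{j}"] that S00 by simp
      then have "norm (x j *\<^sub>R t j) = 0" using norm_ge_zero[of "x j *\<^sub>R t j"] by linarith
      then have "x j *\<^sub>R t j = 0" by (simp only: norm_eq_zero)
      then show ?thesis using tnz t_def by simp
    qed
    then have "a = 0" unfolding a_def by (simp add: r)
    then show False using bigS S00 by simp
  qed
  have aS: "a > D * S powr r"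
  proof (rule ccontr)
    assume "\<not> a > D * S powr r"
    then have "a \<le> (C * S) powr r" using Cr C S0 by (simp add: powr_mult)
    then have "a powr (1/r) \<le> ((C * S) powr r) powr (1/r)" using r by (intro powr_mono2) (auto simp: a_def)
    also have "\<dots> = C * S" using r C S0 by (simp add: powr_powr)
    finally show False using bigS by simp
  qed
  define F1 where "F1 = F \<inter> {..<n}"
  define F2 where "F2 = F - {..<n}"
  have xle: "x j powr r * norm (t j) \<le> S powr r * norm (t j) powr (1 - r)" if j: "j \<in> F" for j
  proof -
    have "x j * norm (t j) \<le> S" using Sge[of "{j}"] j xF by (simp add: abs_mult)
    then have "x j \<le> S / norm (t j)" using tpos[of j] by (simp add: field_simps)
    then have "x j powr r \<le> (S / norm (t j)) powr r" using xF j r by (intro powr_mono2) auto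
    then have "x j powr r * norm (t j) \<le> (S / norm (t j)) powr r * norm (t j)"
      using tpos[of j] by (simp add: mult_right_mono)
    also have "\<dots> = S powr r * norm (t j) powr (1 - r)"
      using tpos[of j] by (simp add: powr_divide powr_diff)
    finally show ?thesis .
  qed
  have F1b: "norm (\<Sum>j\<in>F1. (x j powr r) *\<^sub>R t j) \<le> S powr r * K"
  proof -
    have "norm (\<Sum>j\<in>F1. (x j powr r) *\<^sub>R t j) \<le> (\<Sum>j\<in>F1. norm ((x j powr r) *\<^sub>R t j))" by (rule norm_sum)
    also have "\<dots> = (\<Sum>j\<in>F1. x j powr r * norm (t j))" by simp
    also have "\<dots> \<le> (\<Sum>j\<in>F1. S powr r * norm (t j) powr (1 - r))"
      by (rule sum_mono) (use xle F1_def in auto)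
    also have "\<dots> \<le> (\<Sum>j<n. S powr r * norm (t j) powr (1 - r))"
      by (rule sum_mono2) (auto simp: F1_def)
    also have "\<dots> = S powr r * K" unfolding K_def by (simp add: sum_distrib_left)
    finally show ?thesis .
  qed
  have F2b: "norm (\<Sum>j\<in>F2. (x j powr r) *\<^sub>R t j) \<ge> \<delta> powr (- r) * S powr r"
  proof -
    have "(\<Sum>j\<in>F. (x j powr r) *\<^sub>R t j) = (\<Sum>j\<in>F1. (x j powr r) *\<^sub>R t j) + (\<Sum>j\<in>F2. (x j powr r) *\<^sub>R t j)"
      unfolding F1_def F2_def by (rule sum.Int_Diff[OF F])
    then have "a \<le> norm (\<Sum>j\<in>F1. (x j powr r) *\<^sub>R t j) + norm (\<Sum>j\<in>F2. (x j powr r) *\<^sub>R t j)"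
      unfolding a_def by (metis norm_triangle_ineq)
    then have "D * S powr r < S powr r * K + norm (\<Sum>j\<in>F2. (x j powr r) *\<^sub>R t j)" using aS F1b by linarith
    moreover have "D * S powr r = S powr r * K + (\<delta> powr (- r) + 1) * S powr r" unfolding D_def by (simp add: algebra_simps)
    ultimately have "(\<delta> powr (- r) + 1) * S powr r < norm (\<Sum>j\<in>F2. (x j powr r) *\<^sub>R t j)" by linarith
    moreover have "\<delta> powr (- r) * S powr r \<le> (\<delta> powr (- r) + 1) * S powr r" by (simp add: mult_right_mono)
    ultimately show ?thesis by linarith
  qed
  define c where "c = \<delta> / S"
  have c: "c > 0" using \<delta> Spos c_def by simp
  define y where "y j = (if j \<in> F then c * x j else 0)" for j
  have y0: "\<forall>j. 0 \<le> y j" using xF c by (simp add: y_def)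
  have F2F: "F2 \<subseteq> F" unfolding F2_def by auto
  have yN: "norm (\<Sum>j\<in>N. y j *\<^sub>R t j) \<le> \<delta>" if N: "N \<subseteq> F2" for N
  proof -
    have "(\<Sum>j\<in>N. y j *\<^sub>R t j) = c *\<^sub>R (\<Sum>j\<in>N. x j *\<^sub>R t j)"
      using N F2F by (auto simp: y_def scaleR_sum_right intro!: sum.cong)
    then have "norm (\<Sum>j\<in>N. y j *\<^sub>R t j) = c * norm (\<Sum>j\<in>N. x j *\<^sub>R t j)" using c by simp
    also have "\<dots> \<le> c * S" using Sge[of N] N F2F c by (intro mult_left_mono) auto
    also have "\<dots> = \<delta>" using Spos c_def by simp
    finally show ?thesis .
  qed
  have yF2: "1 \<le> norm (\<Sum>j\<in>F2. (y j powr r) *\<^sub>R t j)"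
  proof -
    have "(\<Sum>j\<in>F2. (y j powr r) *\<^sub>R t j) = (c powr r) *\<^sub>R (\<Sum>j\<in>F2. (x j powr r) *\<^sub>R t j)"
      using F2F c xF by (auto simp: y_def scaleR_sum_right powr_mult intro!: sum.cong)
    then have "norm (\<Sum>j\<in>F2. (y j powr r) *\<^sub>R t j) = c powr r * norm (\<Sum>j\<in>F2. (x j powr r) *\<^sub>R t j)" by simp
    also have "\<dots> \<ge> c powr r * (\<delta> powr (- r) * S powr r)" using F2b by (intro mult_left_mono) auto
    moreover have "c powr r * (\<delta> powr (- r) * S powr r) = 1"
      using \<delta> Spos unfolding c_def by (simp add: powr_divide powr_minus field_simps)
    ultimately show ?thesis by linarith
  qed
  have "finite F2" "F2 \<subseteq> {n..}" using F unfolding F2_def by auto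
  then show ?thesis using y0 yN yF2 unfolding t_def by blast
qed

lemma geo_half:
  "(\<Sum>k<L. if K \<le> k then (1/2::real)^k else 0) = (if L \<le> K then 0 else 2 * (1/2)^K - 2 * (1/2)^L)"
proof (induction L)
  case 0 then show ?case by simp
next
  case (Suc L)
  have eq: "(\<Sum>k<Suc L. if K \<le> k then (1/2::real)^k else 0) = (\<Sum>k<L. if K \<le> k then (1/2::real)^k else 0) + (if K \<le> L then (1/2)^L else 0)"
    by simp
  consider "L < K" | "L = K" | "K < L" by linarith
  then show ?case
  proof cases
    case 1 then show ?thesis using eq Suc by simp
  next
    case 2 then show ?thesis using eq Suc by simp
  next
    case 3 then show ?thesis using eq Suc by simp
  qed
qed

lemma geo_half_le: "(\<Sum>k<L. if K \<le> k then (1/2::real)^k else 0) \<le> 2 * (1/2)^K"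
  unfolding geo_half by simp


lemma onlyif_dir:
  fixes T :: "(nat \<Rightarrow> real) \<Rightarrow> 'e::banach"
  assumes incl: "ell1_mT T \<subseteq> ellr_mT T r" and r: "r > 0" and tnz: "\<And>j. T (unitseq j) \<noteq> 0"
  shows "r_power_dominated T r"
proof (rule ccontr)
  assume nd: "\<not> r_power_dominated T r"
  define t where "t j = T (unitseq j)" for j
  define P where "P n k p \<longleftrightarrow> finite (fst p) \<and> fst p \<subseteq> {n..} \<and> (\<forall>j. 0 \<le> snd p j) \<and>
     (\<forall>N\<subseteq>fst p. norm (\<Sum>j\<in>N. snd p j *\<^sub>R t j) \<le> (1/2::real)^k) \<and>
     1 \<le> norm (\<Sum>j\<in>fst p. (snd p j powr r) *\<^sub>R t j)" for n k and p :: "nat set \<times> (nat \<Rightarrow> real)"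
  have ex: "\<exists>p. P n k p" for n k
  proof -
    obtain F y where "finite F \<and> F \<subseteq> {n..} \<and> (\<forall>j. 0 \<le> y j) \<and>
     (\<forall>N\<subseteq>F. norm (\<Sum>j\<in>N. y j *\<^sub>R T (unitseq j)) \<le> (1/2::real)^k) \<and>
     1 \<le> norm (\<Sum>j\<in>F. (y j powr r) *\<^sub>R T (unitseq j))"
      using blocks_exist[OF nd r tnz, of "(1/2::real)^k" n] by auto
    then have "P n k (F, y)" unfolding P_def t_def by simp
    then show ?thesis by blast
  qed
  define Bf where "Bf n k = (SOME p. P n k p)" for n k
  have BfP: "P n k (Bf n k)" for n k unfolding Bf_def by (rule someI_ex[OF ex])
  define nb where "nb = rec_nat 0 (\<lambda>k m. Suc (Max (fst (Bf m k))))"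
  have nb0: "nb 0 = 0" and nbS: "nb (Suc k) = Suc (Max (fst (Bf (nb k) k)))" for k
    unfolding nb_def by simp_all
  define F where "F k = fst (Bf (nb k) k)" for k
  define yk where "yk k = snd (Bf (nb k) k)" for k
  have Ffin: "finite (F k)" and Fge: "F k \<subseteq> {nb k..}" and y0: "\<And>j. 0 \<le> yk k j"
    and ysmall: "\<And>N. N \<subseteq> F k \<Longrightarrow> norm (\<Sum>j\<in>N. yk k j *\<^sub>R t j) \<le> (1/2::real)^k"
    and ybig: "1 \<le> norm (\<Sum>j\<in>F k. (yk k j powr r) *\<^sub>R t j)" for k
    using BfP[of "nb k" k] unfolding P_def F_def yk_def by blast+
  have Fne: "F k \<noteq> {}" for k using ybig[of k] by auto
  have Fsub: "F k \<subseteq> {nb k..<nb (Suc k)}" for k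
  proof
    fix j assume j: "j \<in> F k"
    then have "j \<le> Max (F k)" using Max_ge[OF Ffin] by blast
    then show "j \<in> {nb k..<nb (Suc k)}" using j Fge[of k] unfolding nbS F_def by auto
  qed
  have nbmono: "strict_mono nb"
    unfolding strict_mono_Suc_iff
  proof
    fix k
    obtain j where "j \<in> F k" using Fne by blast
    then show "nb k < nb (Suc k)" using Fsub[of k] by auto
  qed
  have nbge: "k \<le> nb k" for k using seq_suble[OF nbmono] .
  have disj: "k = k'" if "j \<in> F k" "j \<in> F k'" for j k k'
  proof (rule ccontr)
    assume "k \<noteq> k'"
    then consider "k < k'" | "k' < k" by linarith
    then show False
    proof cases
      case 1
      then have "nb (Suc k) \<le> nb k'" using nbmono by (simp add: strict_mono_less_eq)
      moreover have "j < nb (Suc k)" "nb k' \<le> j" using Fsub[of k] Fsub[of k'] that by auto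
      ultimately show False by linarith
    next
      case 2
      then have "nb (Suc k') \<le> nb k" using nbmono by (simp add: strict_mono_less_eq)
      moreover have "j < nb (Suc k')" "nb k \<le> j" using Fsub[of k] Fsub[of k'] that by auto
      ultimately show False by linarith
    qed
  qed
  define X where "X j = (if \<exists>k. j \<in> F k then yk (SOME k. j \<in> F k) j else 0)" for j
  have XF: "X j = yk k j" if "j \<in> F k" for j k
  proof -
    have "(SOME k. j \<in> F k) = k" using someI[of "\<lambda>k. j \<in> F k", OF that] disj that by blast
    then show ?thesis unfolding X_def using that by auto
  qed
  have X0: "X j = 0" if "\<forall>k. j \<notin> F k" for j using that unfolding X_def by auto
  have Xuc: "\<exists>n. \<forall>G. finite G \<longrightarrow> G \<subseteq> {n..} \<longrightarrow> norm (\<Sum>j\<in>G. X j *\<^sub>R t j) < \<epsilon>"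
    if e: "\<epsilon> > 0" for \<epsilon>
  proof -
    obtain K where K: "(1/2::real)^K < \<epsilon>/2" using real_arch_pow_inv[of "\<epsilon>/2" "1/2"] e by auto
    show ?thesis
    proof (intro exI allI impI)
      fix G assume G: "finite G" "G \<subseteq> {nb K..}"
      show "norm (\<Sum>j\<in>G. X j *\<^sub>R t j) < \<epsilon>"
      proof (cases "G = {}")
        case True then show ?thesis using e by simp
      next
        case False
        define L where "L = Suc (Max G)"
        define A where "A k = G \<inter> F k" for k
        have sub: "G \<inter> (\<Union>k\<in>{..<L}. F k) \<subseteq> G" by auto
        have "(\<Sum>j\<in>G. X j *\<^sub>R t j) = (\<Sum>j\<in>G \<inter> (\<Union>k\<in>{..<L}. F k). X j *\<^sub>R t j)"
        proof (rule sum.mono_neutral_right[OF G(1) sub])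
          show "\<forall>j\<in>G - G \<inter> (\<Union>k\<in>{..<L}. F k). X j *\<^sub>R t j = 0"
          proof
            fix j assume j: "j \<in> G - G \<inter> (\<Union>k\<in>{..<L}. F k)"
            have "j \<notin> F k" for k
            proof
              assume jk: "j \<in> F k"
              have "j \<le> Max G" using j Max_ge[OF G(1)] by blast
              moreover have "k \<le> j" using jk Fge[of k] nbge[of k] by auto
              ultimately have "k < L" unfolding L_def by simp
              then show False using j jk by blast
            qed
            then show "X j *\<^sub>R t j = 0" using X0 by simp
          qed
        qed
        also have "G \<inter> (\<Union>k\<in>{..<L}. F k) = (\<Union>k\<in>{..<L}. A k)" unfolding A_def by auto
        also have "(\<Sum>j\<in>(\<Union>k\<in>{..<L}. A k). X j *\<^sub>R t j) = (\<Sum>k<L. \<Sum>j\<in>A k. X j *\<^sub>R t j)"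
          by (rule sum.UNION_disjoint) (auto simp: A_def G(1) dest: disj)
        finally have eqs: "(\<Sum>j\<in>G. X j *\<^sub>R t j) = (\<Sum>k<L. \<Sum>j\<in>A k. X j *\<^sub>R t j)" .
        have bk: "norm (\<Sum>j\<in>A k. X j *\<^sub>R t j) \<le> (if K \<le> k then (1/2::real)^k else 0)" for k
        proof (cases "K \<le> k")
          case True
          have "(\<Sum>j\<in>A k. X j *\<^sub>R t j) = (\<Sum>j\<in>A k. yk k j *\<^sub>R t j)"
            by (rule sum.cong) (auto simp: A_def XF)
          then show ?thesis using ysmall[of "A k" k] True by (simp add: A_def)
        next
          case False
          have "A k = {}"
          proof -
            have "nb (Suc k) \<le> nb K" using False nbmono by (simp add: strict_mono_less_eq)
            show ?thesis unfolding A_def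
            proof (intro equalityI subsetI)
              fix j assume j: "j \<in> G \<inter> F k"
              then have "j < nb (Suc k)" "nb K \<le> j" using Fsub[of k] G(2) by auto
              then show "j \<in> {}" using \<open>nb (Suc k) \<le> nb K\<close> by linarith
            qed auto
          qed
          then show ?thesis using False by simp
        qed
        have "norm (\<Sum>j\<in>G. X j *\<^sub>R t j) \<le> (\<Sum>k<L. norm (\<Sum>j\<in>A k. X j *\<^sub>R t j))"
          unfolding eqs by (rule norm_sum)
        also have "\<dots> \<le> (\<Sum>k<L. if K \<le> k then (1/2::real)^k else 0)" by (rule sum_mono) (rule bk)
        also have "\<dots> \<le> 2 * (1/2)^K" by (rule geo_half_le)
        also have "\<dots> < \<epsilon>" using K by simp
        finally show ?thesis .
      qed
    qed
  qed
  have "wsub (\<lambda>j. X j *\<^sub>R t j)" by (rule UC_wsub) (use Xuc in blast)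
  then have "X \<in> ell1_mT T" using ell1_mT_iff[of X T] unfolding t_def by simp
  then have "X \<in> ellr_mT T r" using incl by blast
  then have "(\<lambda>j. \<bar>X j\<bar> powr r) \<in> ell1_mT T" unfolding ellr_mT_def by simp
  then have "wsub (\<lambda>j. (\<bar>X j\<bar> powr r) *\<^sub>R t j)" using ell1_mT_iff[of "\<lambda>j. \<bar>X j\<bar> powr r" T] unfolding t_def by simp
  from wsub_UC[OF this, of 1] obtain n0 where
    n0: "\<And>G. finite G \<Longrightarrow> G \<subseteq> {n0..} \<Longrightarrow> norm (\<Sum>j\<in>G. (\<bar>X j\<bar> powr r) *\<^sub>R t j) < 1" by auto
  have "F n0 \<subseteq> {n0..}" using Fge[of n0] nbge[of n0] by auto
  then have "norm (\<Sum>j\<in>F n0. (\<bar>X j\<bar> powr r) *\<^sub>R t j) < 1" using n0 Ffin by blast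
  moreover have "(\<Sum>j\<in>F n0. (\<bar>X j\<bar> powr r) *\<^sub>R t j) = (\<Sum>j\<in>F n0. (yk n0 j powr r) *\<^sub>R t j)"
    by (rule sum.cong) (auto simp: XF y0)
  ultimately show False using ybig[of n0] by simp
qed

theorem lemma7p4:
  fixes T :: "(nat \<Rightarrow> real) \<Rightarrow> 'e::banach" and r :: real
  assumes "bounded_linear_on_ell1 T"
    and "\<And>n. T (unitseq n) \<noteq> 0"
    and "0 < r"
  shows "ell1_mT T \<subseteq> ellr_mT T r \<longleftrightarrow> r_power_dominated T r"
proof
  assume "ell1_mT T \<subseteq> ellr_mT T r"
  then show "r_power_dominated T r" using onlyif_dir assms(2,3) by blast
next
  assume "r_power_dominated T r"
  then show "ell1_mT T \<subseteq> ellr_mT T r" using if_dir assms(3) by blast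
qed

end
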